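(* Let $X$ be a Banach space with a normalized 1-unconditional basis $(x_i)_i$. Then $\mathcal{L}_\mathrm{diag}(J(X))\cong J(X)^*$, $\mathbb{R} I\oplus\mathcal{K}_\mathrm{diag}(J(X))\cong\mathcal{J}_*(X)$, $\mathcal{L}_\mathrm{diag}(\mathcal{J}_*(X))\cong\mathcal{J}_*(X)^*$ and $\mathcal{K}_\mathrm{diag}(\mathcal{J}_*(X))\cong J(X)$. More precisely: the map $A:\mathcal{L}_\mathrm{diag}(J(X))\to J(X)^*$, $A(\mathrm{SOT}\text{-}\sum_i\lambda_ie_i^*\otimes e_i)=w^*\text{-}\sum_i\lambda_ie_i^*$, is an onto isomorphism with $\|A\|\|A^{-1}\|\le2$, and the image of $\mathbb{R} I\oplus\mathcal{K}_\mathrm{diag}(J(X))$ under $A$ is $\mathcal{J}_*(X)$; and the map $B:\mathcal{L}_\mathrm{diag}(\mathcal{J}_*(X))\to\mathcal{J}_*(X)^*$, $B(\mathrm{SOT}\text{-}\sum_i\lambda_iv_i^*\otimes v_i)=w^*\text{-}\sum_i\lambda_iv_i^*$, is an onto isomorphism with $\|B\|\|B^{-1}\|\le2$, and the image of $\mathbb{R}I\oplus\mathcal{K}_\mathrm{diag}(\mathcal{J}_*(X))$ under $B$ is $\mathbb{R}e_\omega\oplus J(X)$.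
   Context: The jamesification $J(X)$ is the completion of $c_{00}(\mathbb{N})$ under $\|\sum_ia_ie_i\|=\sup\{\|\sum_n(\sum_{i=k_n}^{m_n}a_i)x_{k_n}\|:1\le k_1\le m_1<k_2\le m_2<\cdots\}$, with unit vector basis $(e_i)$ and biorthogonals $(e_i^* )$. $s\in J(X)^*$ is $s(\sum a_ie_i)=\sum a_i$; $\mathcal{J}_*(X)=\mathbb{R}s\oplus\overline{\mathrm{span}}\{e_i^*\}\subset J(X)^*$, with Schauder basis $v_1=s$, $v_{i+1}=s-\sum_{j=1}^ie_j^*$, and $(v_i^* )\subset\mathcal{J}_*(X)^*$ its biorthogonals; $J(X)$ is identified with $\overline{\mathrm{span}}\{v_i^*\}\subset\mathcal{J}_*(X)^*$ via $e_i=\sum_{j\le i}v_j^*$, and $e_\omega=w^*\text{-}\sum_iv_i^*\in\mathcal{J}_*(X)^*$. For a space $Z$ with Schauder basis $(z_i)$, $z_i^*\otimes z_i$ is the operator $z\mapsto z_i^*(z)z_i$; $\mathcal{L}_\mathrm{diag}(Z)$ are the diagonal operators ($z_j^*(Tz_i)=0$ for $i\ne j$), $\mathcal{K}_\mathrm{diag}(Z)$ the compact ones, and $\mathbb{R}I\oplus\mathcal{K}_\mathrm{diag}(Z)$ the operators $\lambda I+K$ with $K\in\mathcal{K}_\mathrm{diag}(Z)$. *)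

theory Defs
  imports Complex_Main
begin

text \<open>Indices are 0-based (the paper's index i corresponds to i-1 here).
  A real sequence a :: nat => real with finite support stands for a finite linear combination
  of basis vectors.\<close>

definition fin_supp :: "(nat \<Rightarrow> real) \<Rightarrow> bool" where
  "fin_supp a \<longleftrightarrow> finite {i. a i \<noteq> 0}"

definition unit_vec :: "nat \<Rightarrow> nat \<Rightarrow> real" where
  "unit_vec j = (\<lambda>i. if i = j then 1 else 0)"

text \<open>N is the norm of X on finitely supported coefficient sequences w.r.t. the basis (x_i):
  N a = norm of sum_i a_i x_i. The hypotheses say (x_i) is a normalized 1-unconditional basis.\<close>

definition normalized_1unc_basis_norm :: "((nat \<Rightarrow> real) \<Rightarrow> real) \<Rightarrow> bool" where
  "normalized_1unc_basis_norm N \<longleftrightarrow>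
     (\<forall>a b. fin_supp a \<longrightarrow> fin_supp b \<longrightarrow> N (\<lambda>i. a i + b i) \<le> N a + N b) \<and>
     (\<forall>a c. fin_supp a \<longrightarrow> N (\<lambda>i. c * a i) = \<bar>c\<bar> * N a) \<and>
     (\<forall>a. fin_supp a \<longrightarrow> a \<noteq> (\<lambda>i. 0) \<longrightarrow> N a > 0) \<and>
     (\<forall>j. N (unit_vec j) = 1) \<and>
     (\<forall>a \<epsilon>. fin_supp a \<longrightarrow> (\<forall>i. \<epsilon> i = 1 \<or> \<epsilon> i = -1) \<longrightarrow> N (\<lambda>i. \<epsilon> i * a i) = N a)"

fun adm :: "(nat \<times> nat) list \<Rightarrow> bool" where
  "adm [] = True"
| "adm [(k, m)] = (k \<le> m)"
| "adm ((k, m) # (k', m') # r) = (k \<le> m \<and> m < k' \<and> adm ((k', m') # r))"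

definition jam_vec :: "(nat \<Rightarrow> real) \<Rightarrow> (nat \<times> nat) list \<Rightarrow> nat \<Rightarrow> real" where
  "jam_vec a I = (\<lambda>j. \<Sum>(k, m)\<leftarrow>I. if j = k then (\<Sum>i=k..m. a i) else 0)"

text \<open>The norm of J(X) on finitely supported sequences (coefficients w.r.t. (e_i)).\<close>

definition Jnorm :: "((nat \<Rightarrow> real) \<Rightarrow> real) \<Rightarrow> (nat \<Rightarrow> real) \<Rightarrow> real" where
  "Jnorm N a = Sup {N (jam_vec a I) | I. adm I}"

text \<open>Generic constructions relative to a space Z with Schauder basis (z_i), given by its norm M
  on finitely supported coefficient sequences (span of the basis is dense in Z).\<close>

definition pairing :: "(nat \<Rightarrow> real) \<Rightarrow> (nat \<Rightarrow> real) \<Rightarrow> real" where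
  "pairing f a = (\<Sum>i\<in>{i. a i \<noteq> 0}. f i * a i)"

text \<open>Z^*: a functional phi is represented by the sequence (phi(z_i))_i\<close>

definition dual_space :: "((nat \<Rightarrow> real) \<Rightarrow> real) \<Rightarrow> (nat \<Rightarrow> real) set" where
  "dual_space M = {f. bdd_above {\<bar>pairing f a\<bar> | a. fin_supp a \<and> M a \<le> 1}}"

definition dual_norm :: "((nat \<Rightarrow> real) \<Rightarrow> real) \<Rightarrow> (nat \<Rightarrow> real) \<Rightarrow> real" where
  "dual_norm M f = Sup {\<bar>pairing f a\<bar> | a. fin_supp a \<and> M a \<le> 1}"

text \<open>L_diag(Z): a diagonal operator T with T z_i = lambda_i z_i is represented by lambda\<close>

definition Ldiag :: "((nat \<Rightarrow> real) \<Rightarrow> real) \<Rightarrow> (nat \<Rightarrow> real) set" where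
  "Ldiag M = {lam. bdd_above {M (\<lambda>i. lam i * a i) | a. fin_supp a \<and> M a \<le> 1}}"

definition op_norm :: "((nat \<Rightarrow> real) \<Rightarrow> real) \<Rightarrow> (nat \<Rightarrow> real) \<Rightarrow> real" where
  "op_norm M lam = Sup {M (\<lambda>i. lam i * a i) | a. fin_supp a \<and> M a \<le> 1}"

definition Kdiag :: "((nat \<Rightarrow> real) \<Rightarrow> real) \<Rightarrow> (nat \<Rightarrow> real) set" where
  "Kdiag M = {lam \<in> Ldiag M. \<forall>\<epsilon>>0. \<exists>F. finite F \<and> (\<forall>b\<in>F. fin_supp b) \<and>
      (\<forall>a. fin_supp a \<and> M a \<le> 1 \<longrightarrow> (\<exists>b\<in>F. M (\<lambda>i. lam i * a i - b i) < \<epsilon>))}"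

definition RI_Kdiag :: "((nat \<Rightarrow> real) \<Rightarrow> real) \<Rightarrow> (nat \<Rightarrow> real) set" where
  "RI_Kdiag M = {lam. \<exists>c \<mu>. \<mu> \<in> Kdiag M \<and> lam = (\<lambda>i. c + \<mu> i)}"

text \<open>closed span of the biorthogonal functionals (z_i^* ) inside Z^*\<close>

definition cspan_dual :: "((nat \<Rightarrow> real) \<Rightarrow> real) \<Rightarrow> (nat \<Rightarrow> real) set" where
  "cspan_dual M = {f \<in> dual_space M.
      (\<lambda>n. dual_norm M (\<lambda>i. if i < n then 0 else f i)) \<longlonglongrightarrow> 0}"

text \<open>R w + closed span (z_i^* ), where w is the functional with w(z_i) = 1 for all i\<close>

definition R_one_cspan_dual :: "((nat \<Rightarrow> real) \<Rightarrow> real) \<Rightarrow> (nat \<Rightarrow> real) set" where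
  "R_one_cspan_dual M = {f. \<exists>c. (\<lambda>i. f i - c) \<in> cspan_dual M}"

text \<open>The norm of J_*(X) on finite combinations sum_j beta_j v_j, where v_0 = s and
  v_{j+1} = s - sum_{i<=j} e_i^*, so (sum_j beta_j v_j)(e_i) = sum_{j<=i} beta_j.\<close>

definition Jsnorm :: "((nat \<Rightarrow> real) \<Rightarrow> real) \<Rightarrow> (nat \<Rightarrow> real) \<Rightarrow> real" where
  "Jsnorm N \<beta> = dual_norm (Jnorm N) (\<lambda>i. \<Sum>j\<le>i. \<beta> j)"

end

theory Submission
  imports Defs
begin


lemma fin_supp_iff: "fin_supp a \<longleftrightarrow> (\<exists>L. \<forall>i\<ge>L. a i = 0)"
proof
  assume "fin_supp a"
  then have fs: "finite {i. a i \<noteq> 0}" by (simp add: fin_supp_def)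
  then obtain L where "\<forall>i\<in>{i. a i \<noteq> 0}. i < L"
    using finite_nat_set_iff_bounded by auto
  then show "\<exists>L. \<forall>i\<ge>L. a i = 0" by (meson leD mem_Collect_eq)
next
  assume "\<exists>L. \<forall>i\<ge>L. a i = 0"
  then obtain L where "\<forall>i\<ge>L. a i = 0" by blast
  then have "{i. a i \<noteq> 0} \<subseteq> {..<L}" by (auto simp: not_less[symmetric])
  then show "fin_supp a" by (simp add: fin_supp_def finite_subset)
qed

lemma fin_suppE:
  assumes "fin_supp a" obtains L where "\<And>i. i \<ge> L \<Longrightarrow> a i = 0"
  using assms fin_supp_iff by blast

lemma fin_supp_bound_ge:
  assumes "fin_supp a" obtains L where "L \<ge> L0" "\<And>i. i \<ge> L \<Longrightarrow> a i = 0"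
proof -
  obtain L where "\<And>i. i \<ge> L \<Longrightarrow> a i = 0" using assms fin_suppE by blast
  then show ?thesis using that[of "max L L0"] by auto
qed

lemma fin_supp_I: "(\<And>i. i \<ge> L \<Longrightarrow> a i = 0) \<Longrightarrow> fin_supp a"
  using fin_supp_iff by blast

lemma fin_supp_zero[simp]: "fin_supp (\<lambda>i. 0)"
  by (simp add: fin_supp_def)

lemma fin_supp_add: "fin_supp a \<Longrightarrow> fin_supp b \<Longrightarrow> fin_supp (\<lambda>i. a i + b i)"
proof -
  assume "fin_supp a" "fin_supp b"
  then obtain L1 L2 where "\<And>i. i \<ge> L1 \<Longrightarrow> a i = 0" "\<And>i. i \<ge> L2 \<Longrightarrow> b i = 0"
    by (meson fin_suppE)
  then show ?thesis by (intro fin_supp_I[of "max L1 L2"]) auto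
qed

lemma fin_supp_diff: "fin_supp a \<Longrightarrow> fin_supp b \<Longrightarrow> fin_supp (\<lambda>i. a i - b i)"
proof -
  assume "fin_supp a" "fin_supp b"
  then obtain L1 L2 where "\<And>i. i \<ge> L1 \<Longrightarrow> a i = 0" "\<And>i. i \<ge> L2 \<Longrightarrow> b i = 0"
    by (meson fin_suppE)
  then show ?thesis by (intro fin_supp_I[of "max L1 L2"]) auto
qed

lemma fin_supp_mult: "fin_supp a \<Longrightarrow> fin_supp (\<lambda>i. f i * a i)"
  by (erule fin_suppE, rule fin_supp_I) auto

lemma fin_supp_mult2: "fin_supp a \<Longrightarrow> fin_supp (\<lambda>i. a i * f i)"
  by (erule fin_suppE, rule fin_supp_I) auto

lemma fin_supp_scale: "fin_supp a \<Longrightarrow> fin_supp (\<lambda>i. c * a i)"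
  by (rule fin_supp_mult)

lemma fin_supp_uminus: "fin_supp a \<Longrightarrow> fin_supp (\<lambda>i. - a i)"
  by (erule fin_suppE, rule fin_supp_I) auto

lemma fin_supp_if: "fin_supp a \<Longrightarrow> fin_supp (\<lambda>i. if P i then a i else 0)"
  by (erule fin_suppE, rule fin_supp_I) auto

lemma fin_supp_if2: "fin_supp a \<Longrightarrow> fin_supp (\<lambda>i. if P i then 0 else a i)"
  by (erule fin_suppE, rule fin_supp_I) auto

lemma fin_supp_below: "fin_supp (\<lambda>i. if i < n then f i else 0)"
  by (rule fin_supp_I[of n]) auto

lemma fin_supp_unit[simp]: "fin_supp (unit_vec j)"
  by (rule fin_supp_I[of "Suc j"]) (auto simp: unit_vec_def)

lemma fin_supp_finite_set: "finite S \<Longrightarrow> (\<And>i. i \<notin> S \<Longrightarrow> a i = 0) \<Longrightarrow> fin_supp a"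
  unfolding fin_supp_def by (metis (mono_tags) mem_Collect_eq rev_finite_subset subsetI)

lemma pairing_eq:
  assumes "finite S" "{i. a i \<noteq> 0} \<subseteq> S"
  shows "pairing f a = (\<Sum>i\<in>S. f i * a i)"
  unfolding pairing_def by (rule sum.mono_neutral_left) (use assms in auto)

lemma pairing_lessThan:
  assumes "\<And>i. i \<ge> L \<Longrightarrow> a i = 0"
  shows "pairing f a = (\<Sum>i<L. f i * a i)"
  by (rule pairing_eq) (use assms in \<open>auto simp: not_less[symmetric]\<close>)

lemma pairing_add:
  assumes "fin_supp a" "fin_supp b"
  shows "pairing f (\<lambda>i. a i + b i) = pairing f a + pairing f b"
proof -
  obtain L1 L2 where "\<And>i. i \<ge> L1 \<Longrightarrow> a i = 0" "\<And>i. i \<ge> L2 \<Longrightarrow> b i = 0"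
    using assms by (metis fin_suppE)
  then have h: "\<And>i. i \<ge> max L1 L2 \<Longrightarrow> a i = 0" "\<And>i. i \<ge> max L1 L2 \<Longrightarrow> b i = 0" by auto
  show ?thesis
    by (subst (1 2 3) pairing_lessThan[of "max L1 L2"]) (auto simp: h algebra_simps sum.distrib)
qed

lemma pairing_scale:
  assumes "fin_supp a"
  shows "pairing f (\<lambda>i. c * a i) = c * pairing f a"
proof -
  obtain L where h: "\<And>i. i \<ge> L \<Longrightarrow> a i = 0"
    using assms by (metis fin_suppE)
  show ?thesis
    by (subst (1 2) pairing_lessThan[of L]) (auto simp: h algebra_simps sum_distrib_left)
qed

lemma pairing_uminus:
  assumes "fin_supp a"
  shows "pairing f (\<lambda>i. - a i) = - pairing f a"
  using pairing_scale[OF assms, of f "-1"] by simp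

lemma pairing_diff:
  assumes "fin_supp a" "fin_supp b"
  shows "pairing f (\<lambda>i. a i - b i) = pairing f a - pairing f b"
  using pairing_add[OF assms(1) fin_supp_uminus[OF assms(2)], of f] pairing_uminus[OF assms(2), of f]
  by simp

lemma pairing_zero[simp]: "pairing f (\<lambda>i. 0) = 0"
  by (simp add: pairing_def)

lemma pairing_unit[simp]: "pairing f (unit_vec j) = f j"
  by (subst pairing_lessThan[of "Suc j"]) (auto simp: unit_vec_def)


lemma pairing_unit_left: "fin_supp x \<Longrightarrow> pairing (unit_vec j) x = x j"
proof -
  assume "fin_supp x"
  then have f: "finite {i. x i \<noteq> 0}" by (simp add: fin_supp_def)
  have "pairing (unit_vec j) x = (\<Sum>i\<in>{i. x i \<noteq> 0}. if i = j then x j else 0)"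
    unfolding pairing_def unit_vec_def by (rule sum.cong) auto
  also have "\<dots> = (if j \<in> {i. x i \<noteq> 0} then x j else 0)"
    using f by (simp add: sum.delta')
  also have "\<dots> = x j" by auto
  finally show ?thesis .
qed

lemma pairing_add_left: "pairing (\<lambda>i. f i + h i) a = pairing f a + pairing h a"
  unfolding pairing_def by (simp add: algebra_simps sum.distrib)

lemma pairing_scale_left: "pairing (\<lambda>i. r * f i) a = r * pairing f a"
  unfolding pairing_def by (simp add: algebra_simps sum_distrib_left)

lemma pairing_diff_left: "pairing (\<lambda>i. f i - h i) a = pairing f a - pairing h a"
  unfolding pairing_def by (simp add: algebra_simps sum_subtractf)

definition inW :: "(nat \<Rightarrow> real) \<Rightarrow> nat \<Rightarrow> (nat \<Rightarrow> real) \<Rightarrow> bool" where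
  "inW c K x \<longleftrightarrow> (\<exists>t d. (\<forall>i\<ge>K. d i = 0) \<and> x = (\<lambda>i. t * c i + d i))"

lemma inW_fin: "fin_supp c \<Longrightarrow> inW c K x \<Longrightarrow> fin_supp x"
  unfolding inW_def
  by (auto intro!: fin_supp_add fin_supp_scale intro: fin_supp_I)

lemma inW_add: "inW c K x \<Longrightarrow> inW c K y \<Longrightarrow> inW c K (\<lambda>i. x i + y i)"
  unfolding inW_def
proof (elim exE conjE)
  fix t d t' d' assume "\<forall>i\<ge>K. d i = 0" "x = (\<lambda>i. t * c i + d i)" "\<forall>i\<ge>K. d' i = 0" "y = (\<lambda>i. t' * c i + d' i)"
  then show "\<exists>t d. (\<forall>i\<ge>K. d i = 0) \<and> (\<lambda>i. x i + y i) = (\<lambda>i. t * c i + d i)"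
    by (intro exI[of _ "t + t'"] exI[of _ "\<lambda>i. d i + d' i"]) (auto simp: algebra_simps)
qed

lemma inW_scale: "inW c K x \<Longrightarrow> inW c K (\<lambda>i. r * x i)"
  unfolding inW_def
proof (elim exE conjE)
  fix t d assume "\<forall>i\<ge>K. d i = 0" "x = (\<lambda>i. t * c i + d i)"
  then show "\<exists>t d. (\<forall>i\<ge>K. d i = 0) \<and> (\<lambda>i. r * x i) = (\<lambda>i. t * c i + d i)"
    by (intro exI[of _ "r * t"] exI[of _ "\<lambda>i. r * d i"]) (auto simp: algebra_simps)
qed

lemma inW_c: "inW c K c"
  unfolding inW_def by (intro exI[of _ 1] exI[of _ "\<lambda>i. 0"]) auto

lemma inW_zero: "inW c K (\<lambda>i. 0)"
  unfolding inW_def by (intro exI[of _ 0] exI[of _ "\<lambda>i. 0"]) auto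

lemma inW_d: "(\<forall>i\<ge>K. d i = 0) \<Longrightarrow> inW c K d"
  unfolding inW_def by (intro exI[of _ 0] exI[of _ d]) auto

context
  fixes N :: "(nat \<Rightarrow> real) \<Rightarrow> real"
  assumes nb: "normalized_1unc_basis_norm N"
begin

lemma N_tri: "fin_supp a \<Longrightarrow> fin_supp b \<Longrightarrow> N (\<lambda>i. a i + b i) \<le> N a + N b"
  using nb unfolding normalized_1unc_basis_norm_def by blast

lemma N_hom: "fin_supp a \<Longrightarrow> N (\<lambda>i. c * a i) = \<bar>c\<bar> * N a"
  using nb unfolding normalized_1unc_basis_norm_def by blast

lemma N_unit: "N (unit_vec j) = 1"
  using nb unfolding normalized_1unc_basis_norm_def by blast

lemma N_sign: "fin_supp a \<Longrightarrow> (\<forall>i. \<epsilon> i = 1 \<or> \<epsilon> i = -1) \<Longrightarrow> N (\<lambda>i. \<epsilon> i * a i) = N a"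
  using nb unfolding normalized_1unc_basis_norm_def by blast

lemma N_zero: "N (\<lambda>i. 0) = 0"
  using N_hom[of "\<lambda>i. 0" 0] by simp

lemma N_nonneg: "fin_supp a \<Longrightarrow> N a \<ge> 0"
proof -
  assume a: "fin_supp a"
  have "N (\<lambda>i. a i + (- a i)) \<le> N a + N (\<lambda>i. - a i)"
    using N_tri[OF a fin_supp_uminus[OF a]] by simp
  then show ?thesis using N_hom[OF a, of "-1"] N_zero by simp
qed

lemma N_uminus: "fin_supp a \<Longrightarrow> N (\<lambda>i. - a i) = N a"
  using N_hom[of a "-1"] by simp

lemma N_l1_aux:
  assumes "finite S"
  shows "\<forall>x. (\<forall>i. i \<notin> S \<longrightarrow> x i = 0) \<longrightarrow> N x \<le> (\<Sum>i\<in>S. \<bar>x i\<bar>)"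
  using assms
proof (induction S rule: finite_induct)
  case empty
  then show ?case using N_zero by (auto simp: fun_eq_iff[symmetric])
next
  case (insert j S)
  show ?case
  proof (intro allI impI)
    fix x :: "nat \<Rightarrow> real" assume x: "\<forall>i. i \<notin> insert j S \<longrightarrow> x i = 0"
    define x' where "x' = (\<lambda>i. if i = j then 0 else x i)"
    have fx: "fin_supp x" using x insert(1) by (intro fin_supp_finite_set[of "insert j S"]) auto
    have fx': "fin_supp x'" unfolding x'_def using fin_supp_if2[OF fx] .
    have xe: "x = (\<lambda>i. x' i + x j * unit_vec j i)"
      by (auto simp: x'_def unit_vec_def)
    have "N x \<le> N x' + N (\<lambda>i. x j * unit_vec j i)"
      using N_tri[OF fx' fin_supp_scale[OF fin_supp_unit]] xe by metis
    also have "N (\<lambda>i. x j * unit_vec j i) = \<bar>x j\<bar>"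
      using N_hom[OF fin_supp_unit, of "x j" j] N_unit by simp
    also have "N x' \<le> (\<Sum>i\<in>S. \<bar>x' i\<bar>)"
      using insert(3) x by (auto simp: x'_def)
    also have "(\<Sum>i\<in>S. \<bar>x' i\<bar>) = (\<Sum>i\<in>S. \<bar>x i\<bar>)"
      using insert(2) by (intro sum.cong) (auto simp: x'_def)
    finally show "N x \<le> (\<Sum>i\<in>insert j S. \<bar>x i\<bar>)"
      using insert(1,2) by simp
  qed
qed

lemma N_l1: "finite S \<Longrightarrow> (\<And>i. i \<notin> S \<Longrightarrow> x i = 0) \<Longrightarrow> N x \<le> (\<Sum>i\<in>S. \<bar>x i\<bar>)"
  using N_l1_aux by blast

lemma N_mono_aux:
  assumes "finite S"
  shows "\<forall>x. fin_supp y \<longrightarrow> (\<forall>i. \<bar>x i\<bar> \<le> \<bar>y i\<bar>) \<longrightarrow> (\<forall>i. i \<notin> S \<longrightarrow> x i = y i) \<longrightarrow> N x \<le> N y"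
  using assms
proof (induction S rule: finite_induct)
  case empty
  then show ?case by (auto simp: fun_eq_iff[symmetric])
next
  case (insert j S)
  show ?case
  proof (intro allI impI)
    fix x :: "nat \<Rightarrow> real"
    assume fy: "fin_supp y" and le: "\<forall>i. \<bar>x i\<bar> \<le> \<bar>y i\<bar>" and eq: "\<forall>i. i \<notin> insert j S \<longrightarrow> x i = y i"
    define x' where "x' = (\<lambda>i. if i = j then y j else x i)"
    have "N x' \<le> N y"
      using insert(3) fy le eq unfolding x'_def by auto
    have fx: "fin_supp x"
    proof -
      have "{i. x i \<noteq> 0} \<subseteq> {i. y i \<noteq> 0}" using le by (auto) (metis abs_le_zero_iff abs_zero)
      then show ?thesis using fy unfolding fin_supp_def by (rule finite_subset)
    qed
    have fx': "fin_supp x'" unfolding x'_def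
    proof -
      have "(\<lambda>i. if i = j then y j else x i) = (\<lambda>i. (if i = j then 0 else x i) + y j * unit_vec j i)"
        by (auto simp: unit_vec_def)
      then show "fin_supp (\<lambda>i. if i = j then y j else x i)"
        using fin_supp_add[OF fin_supp_if2[OF fx] fin_supp_scale[OF fin_supp_unit]] by metis
    qed
    have "N x \<le> N x'"
    proof (cases "y j = 0")
      case True
      then have "x = x'" using le unfolding x'_def by (auto simp: fun_eq_iff) (metis abs_0 abs_le_zero_iff)
      then show ?thesis by simp
    next
      case False
      define t where "t = (1 + x j / y j) / 2"
      have "\<bar>x j / y j\<bar> \<le> 1" using le False by (simp add: abs_divide divide_le_eq_1)
      then have t01: "0 \<le> t" "t \<le> 1" unfolding t_def by (auto simp: abs_le_iff simp del: abs_divide)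
      define \<epsilon> where "\<epsilon> = (\<lambda>i. if i = j then -1 else (1::real))"
      define z where "z = (\<lambda>i. \<epsilon> i * x' i)"
      have fz: "fin_supp z" unfolding z_def by (rule fin_supp_mult[OF fx'])
      have Nz: "N z = N x'" unfolding z_def by (rule N_sign[OF fx']) (auto simp: \<epsilon>_def)
      have xe: "x = (\<lambda>i. t * x' i + (1 - t) * z i)"
      proof
        fix i show "x i = t * x' i + (1 - t) * z i"
        proof (cases "i = j")
          case True
          then show ?thesis using False by (simp add: x'_def z_def \<epsilon>_def t_def field_simps)
        next
          case False
          then show ?thesis by (simp add: x'_def z_def \<epsilon>_def algebra_simps)
        qed
      qed
      have "N x \<le> N (\<lambda>i. t * x' i) + N (\<lambda>i. (1 - t) * z i)"
        using N_tri[OF fin_supp_scale[OF fx'] fin_supp_scale[OF fz]] xe by metis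
      also have "\<dots> = t * N x' + (1 - t) * N z"
        using N_hom[OF fx'] N_hom[OF fz] t01 by simp
      also have "\<dots> = N x'" using Nz by (simp add: algebra_simps)
      finally show ?thesis .
    qed
    then show "N x \<le> N y" using \<open>N x' \<le> N y\<close> by simp
  qed
qed

lemma N_mono: "fin_supp y \<Longrightarrow> (\<And>i. \<bar>x i\<bar> \<le> \<bar>y i\<bar>) \<Longrightarrow> N x \<le> N y"
proof -
  assume fy: "fin_supp y" and le: "\<And>i. \<bar>x i\<bar> \<le> \<bar>y i\<bar>"
  have z: "\<And>i. y i = 0 \<Longrightarrow> x i = 0" using le by (metis abs_0 abs_le_zero_iff)
  have "\<forall>i. i \<notin> {i. y i \<noteq> 0} \<longrightarrow> x i = y i" using z by auto
  then show ?thesis using N_mono_aux[of "{i. y i \<noteq> 0}" y] fy le by (auto simp: fin_supp_def)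
qed

lemma N_weight: "fin_supp y \<Longrightarrow> W \<ge> 0 \<Longrightarrow> (\<And>i. \<bar>x i\<bar> \<le> W * \<bar>y i\<bar>) \<Longrightarrow> N x \<le> W * N y"
proof -
  assume fy: "fin_supp y" and W: "W \<ge> 0" and le: "\<And>i. \<bar>x i\<bar> \<le> W * \<bar>y i\<bar>"
  have "N x \<le> N (\<lambda>i. W * y i)"
    by (rule N_mono[OF fin_supp_scale[OF fy]]) (use le W in \<open>simp add: abs_mult\<close>)
  then show ?thesis using N_hom[OF fy, of W] W by simp
qed


lemma HB_ext:
  assumes fc: "fin_supp c"
    and gK: "\<forall>x. inW c K x \<longrightarrow> pairing g x \<le> N x"
    and w: "\<forall>x. inW c K x \<longrightarrow> pairing w x = 0" and wK: "w K = 1"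
  shows "\<exists>g'. (\<forall>x. inW c (Suc K) x \<longrightarrow> pairing g' x \<le> N x) \<and> pairing g' c = pairing g c"
proof -
  define e where "e = unit_vec K"
  have fe: "fin_supp e" unfolding e_def by simp
  define S where "S = {pairing g x - N (\<lambda>i. x i - e i) | x. inW c K x}"
  define \<tau> where "\<tau> = Sup S"
  have key1: "pairing g x - N (\<lambda>i. x i - e i) \<le> N (\<lambda>i. y i + e i) - pairing g y"
    if x: "inW c K x" and y: "inW c K y" for x y
  proof -
    have fx: "fin_supp x" and fy: "fin_supp y" using x y inW_fin[OF fc] by auto
    have "pairing g (\<lambda>i. x i + y i) \<le> N (\<lambda>i. x i + y i)"
      using gK inW_add[OF x y] by blast
    also have "(\<lambda>i. x i + y i) = (\<lambda>i. (x i - e i) + (y i + e i))" by auto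
    also have "N \<dots> \<le> N (\<lambda>i. x i - e i) + N (\<lambda>i. y i + e i)"
      by (rule N_tri) (auto intro: fin_supp_diff fin_supp_add fx fy fe)
    finally show ?thesis using pairing_add[OF fx fy, of g] by simp
  qed
  have Sne: "S \<noteq> {}" unfolding S_def using inW_zero by blast
  have Sbdd: "bdd_above S"
  proof -
    have "\<forall>s\<in>S. s \<le> N (\<lambda>i. 0 + e i) - pairing g (\<lambda>i. 0)"
      unfolding S_def using key1 inW_zero by blast
    then show ?thesis by (auto simp: bdd_above_def)
  qed
  have tau_le: "\<tau> \<le> N (\<lambda>i. y i + e i) - pairing g y" if y: "inW c K y" for y
    unfolding \<tau>_def by (rule cSup_least[OF Sne]) (use key1 y in \<open>auto simp: S_def\<close>)
  have tau_ge: "pairing g x - N (\<lambda>i. x i - e i) \<le> \<tau>" if x: "inW c K x" for x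
    unfolding \<tau>_def by (rule cSup_upper[OF _ Sbdd]) (use x in \<open>auto simp: S_def\<close>)
  define g' where "g' = (\<lambda>i. g i + (\<tau> - g K) * w i)"
  have pg': "pairing g' z = pairing g z + (\<tau> - g K) * pairing w z" for z
    unfolding g'_def by (simp add: pairing_add_left pairing_scale_left)
  have main: "pairing g' (\<lambda>i. x i + s * e i) \<le> N (\<lambda>i. x i + s * e i)" if x: "inW c K x" for x s
  proof -
    have fx: "fin_supp x" using x inW_fin[OF fc] by auto
    have fse: "fin_supp (\<lambda>i. s * e i)" using fe by (rule fin_supp_scale)
    have A: "pairing g (\<lambda>i. x i + s * e i) = pairing g x + s * g K"
      using pairing_add[OF fx fse, of g] pairing_scale[OF fe, of g s] by (simp add: e_def)
    have B: "pairing w (\<lambda>i. x i + s * e i) = s"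
      using pairing_add[OF fx fse, of w] pairing_scale[OF fe, of w s] w x wK by (simp add: e_def)
    have eq: "pairing g' (\<lambda>i. x i + s * e i) = pairing g x + s * \<tau>"
      unfolding pg' A B by (simp add: algebra_simps)
    consider "s > 0" | "s < 0" | "s = 0" by linarith
    then show ?thesis
    proof cases
      case 1
      define y where "y = (\<lambda>i. (1 / s) * x i)"
      have y: "inW c K y" unfolding y_def by (rule inW_scale[OF x])
      have fy: "fin_supp y" using y inW_fin[OF fc] by auto
      have h: "s * \<tau> \<le> s * (N (\<lambda>i. y i + e i) - pairing g y)"
        using tau_le[OF y] 1 by (simp add: mult_left_mono)
      have py: "pairing g y = (1 / s) * pairing g x" unfolding y_def by (rule pairing_scale[OF fx])
      have Ny: "N (\<lambda>i. x i + s * e i) = s * N (\<lambda>i. y i + e i)"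
      proof -
        have "(\<lambda>i. x i + s * e i) = (\<lambda>i. s * (y i + e i))" using 1 by (auto simp: y_def field_simps)
        then show ?thesis using N_hom[OF fin_supp_add[OF fy fe], of s] 1 by simp
      qed
      have "s * \<tau> \<le> N (\<lambda>i. x i + s * e i) - pairing g x"
        using h 1 unfolding Ny py by (simp add: right_diff_distrib)
      then show ?thesis using eq by simp
    next
      case 2
      define r where "r = - s"
      have r: "r > 0" using 2 by (simp add: r_def)
      define y where "y = (\<lambda>i. (1 / r) * x i)"
      have y: "inW c K y" unfolding y_def by (rule inW_scale[OF x])
      have fy: "fin_supp y" using y inW_fin[OF fc] by auto
      have h: "r * (pairing g y - N (\<lambda>i. y i - e i)) \<le> r * \<tau>"
        using tau_ge[OF y] r by (simp add: mult_left_mono)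
      have py: "pairing g y = (1 / r) * pairing g x" unfolding y_def by (rule pairing_scale[OF fx])
      have Ny: "N (\<lambda>i. x i + s * e i) = r * N (\<lambda>i. y i - e i)"
      proof -
        have "(\<lambda>i. x i + s * e i) = (\<lambda>i. r * (y i - e i))" using r by (auto simp: y_def r_def field_simps)
        then show ?thesis using N_hom[OF fin_supp_diff[OF fy fe], of r] r by simp
      qed
      have "pairing g x - N (\<lambda>i. x i + s * e i) \<le> r * \<tau>"
        using h r unfolding Ny py by (simp add: right_diff_distrib)
      then show ?thesis using eq by (simp add: r_def algebra_simps)
    next
      case 3
      then show ?thesis using eq gK x by simp
    qed
  qed
  show ?thesis
  proof (intro exI conjI allI impI)
    fix z assume "inW c (Suc K) z"
    then obtain t d where d: "\<forall>i\<ge>Suc K. d i = 0" and z: "z = (\<lambda>i. t * c i + d i)"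
      unfolding inW_def by blast
    define x where "x = (\<lambda>i. t * c i + (if i = K then 0 else d i))"
    have x: "inW c K x" unfolding inW_def x_def
      by (intro exI[of _ t] exI[of _ "\<lambda>i. if i = K then 0 else d i"]) (use d in auto)
    have "z = (\<lambda>i. x i + d K * e i)"
      by (auto simp: z x_def e_def unit_vec_def)
    then show "pairing g' z \<le> N z" using main[OF x] by simp
  next
    show "pairing g' c = pairing g c" using pg' w inW_c by simp
  qed
qed

lemma HB_base:
  assumes fc: "fin_supp c"
  shows "\<exists>g. (\<forall>x. inW c 0 x \<longrightarrow> pairing g x \<le> N x) \<and> pairing g c = N c"
proof (cases "\<exists>j. c j \<noteq> 0")
  case False
  then have c0: "c = (\<lambda>i. 0)" by auto
  have "inW c 0 x \<Longrightarrow> x = (\<lambda>i. 0)" for x unfolding inW_def c0 by auto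
  then show ?thesis
  proof (intro exI[of _ "\<lambda>i. 0"] conjI allI impI)
    fix x assume h: "\<And>x. inW c 0 x \<Longrightarrow> x = (\<lambda>i. 0)" and "inW c 0 x"
    then have "x = (\<lambda>i. 0)" by blast
    then show "pairing (\<lambda>i. 0) x \<le> N x" using N_zero by (simp add: pairing_def)
  next
    show "pairing (\<lambda>i. 0) c = N c" using c0 N_zero by (simp add: pairing_def)
  qed
next
  case True
  then obtain j where cj: "c j \<noteq> 0" by blast
  define g where "g = (\<lambda>i. (N c / c j) * unit_vec j i)"
  have pg: "pairing g x = (N c / c j) * x j" if "fin_supp x" for x
    unfolding g_def by (simp only: pairing_scale_left pairing_unit_left[OF that])
  show ?thesis
  proof (intro exI[of _ g] conjI allI impI)
    fix x assume "inW c 0 x"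
    then obtain t where x: "x = (\<lambda>i. t * c i)" unfolding inW_def by auto
    have "pairing g x = t * N c" using pg[of x] cj fin_supp_scale[OF fc] x by simp
    also have "\<dots> \<le> \<bar>t\<bar> * N c" using N_nonneg[OF fc] by (simp add: mult_right_mono)
    also have "\<dots> = N x" using N_hom[OF fc] x by simp
    finally show "pairing g x \<le> N x" .
  next
    show "pairing g c = N c" using pg[OF fc] cj by simp
  qed
qed

lemma HB_K:
  assumes fc: "fin_supp c"
  shows "\<exists>g. (\<forall>x. inW c K x \<longrightarrow> pairing g x \<le> N x) \<and> pairing g c = N c"
proof (induction K)
  case 0
  then show ?case using HB_base[OF fc] .
next
  case (Suc K)
  then obtain g where gK: "\<forall>x. inW c K x \<longrightarrow> pairing g x \<le> N x" and gc: "pairing g c = N c" by blast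
  show ?case
  proof (cases "\<exists>j>K. c j \<noteq> 0")
    case True
    then obtain j where j: "j > K" "c j \<noteq> 0" by blast
    define w where "w = (\<lambda>i. unit_vec K i - (c K / c j) * unit_vec j i)"
    have w: "\<forall>x. inW c K x \<longrightarrow> pairing w x = 0"
    proof (intro allI impI)
      fix x assume x: "inW c K x"
      have fx: "fin_supp x" using x inW_fin[OF fc] by auto
      obtain t d where d: "\<forall>i\<ge>K. d i = 0" and xe: "x = (\<lambda>i. t * c i + d i)" using x unfolding inW_def by blast
      have "pairing w x = pairing (unit_vec K) x - pairing (\<lambda>i. (c K / c j) * unit_vec j i) x"
        unfolding w_def by (rule pairing_diff_left)
      also have "pairing (\<lambda>i. (c K / c j) * unit_vec j i) x = (c K / c j) * x j"
        by (simp only: pairing_scale_left pairing_unit_left[OF fx])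
      also have "pairing (unit_vec K) x = x K" by (rule pairing_unit_left[OF fx])
      finally have "pairing w x = x K - (c K / c j) * x j" .
      also have "\<dots> = 0" using d j by (simp add: xe field_simps)
      finally show "pairing w x = 0" .
    qed
    have wK: "w K = 1" using j by (simp add: w_def unit_vec_def)
    show ?thesis using HB_ext[OF fc gK w wK] gc by auto
  next
    case False
    show ?thesis
    proof (cases "c K = 0")
      case True
      define w where "w = unit_vec K"
      have w: "\<forall>x. inW c K x \<longrightarrow> pairing w x = 0"
      proof (intro allI impI)
        fix x assume x: "inW c K x"
        have fx: "fin_supp x" using x inW_fin[OF fc] by auto
        obtain t d where d: "\<forall>i\<ge>K. d i = 0" and xe: "x = (\<lambda>i. t * c i + d i)" using x unfolding inW_def by blast
        show "pairing w x = 0" unfolding w_def using pairing_unit_left[OF fx] d True xe by simp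
      qed
      have wK: "w K = 1" by (simp add: w_def unit_vec_def)
      show ?thesis using HB_ext[OF fc gK w wK] gc by auto
    next
      case cK: False
      have "inW c K x" if xS: "inW c (Suc K) x" for x
      proof -
        obtain t d where d: "\<forall>i\<ge>Suc K. d i = 0" and xe: "x = (\<lambda>i. t * c i + d i)" using xS unfolding inW_def by blast
        show ?thesis unfolding inW_def
        proof (intro exI conjI)
          show "\<forall>i\<ge>K. (\<lambda>i. d i - (d K / c K) * c i) i = 0"
            using d False cK by (auto simp: le_less Suc_le_eq) (metis Suc_le_eq le_less)
          show "x = (\<lambda>i. (t + d K / c K) * c i + (d i - (d K / c K) * c i))"
            using xe by (auto simp: algebra_simps)
        qed
      qed
      then show ?thesis using gK gc by blast
    qed
  qed
qed

lemma HB: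
  assumes fc: "fin_supp c"
  shows "\<exists>g. (\<forall>d. (\<forall>i\<ge>L. d i = 0) \<longrightarrow> \<bar>pairing g d\<bar> \<le> N d) \<and> pairing g c = N c"
proof -
  obtain g where gK: "\<forall>x. inW c L x \<longrightarrow> pairing g x \<le> N x" and gc: "pairing g c = N c"
    using HB_K[OF fc] by blast
  have "\<bar>pairing g d\<bar> \<le> N d" if d: "\<forall>i\<ge>L. d i = 0" for d
  proof -
    have fd: "fin_supp d" using d fin_supp_I by blast
    have "pairing g d \<le> N d" using gK inW_d[OF d] by blast
    moreover have "pairing g (\<lambda>i. - d i) \<le> N (\<lambda>i. - d i)"
      using gK inW_d[of L "\<lambda>i. - d i"] d by auto
    ultimately show ?thesis using pairing_uminus[OF fd] N_uminus[OF fd] by auto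
  qed
  then show ?thesis using gc by blast
qed

end


definition valid :: "nat set \<Rightarrow> (nat \<Rightarrow> nat) \<Rightarrow> bool" where
  "valid K e \<longleftrightarrow> finite K \<and> (\<forall>k\<in>K. k \<le> e k) \<and> (\<forall>k\<in>K. \<forall>k'\<in>K. k < k' \<longrightarrow> e k < k')"

definition jv :: "(nat \<Rightarrow> real) \<Rightarrow> nat set \<Rightarrow> (nat \<Rightarrow> nat) \<Rightarrow> nat \<Rightarrow> real" where
  "jv a K e = (\<lambda>j. if j \<in> K then (\<Sum>i=j..e j. a i) else 0)"

definition l1 :: "(nat \<Rightarrow> real) \<Rightarrow> real" where
  "l1 a = (\<Sum>i\<in>{i. a i \<noteq> 0}. \<bar>a i\<bar>)"

lemma adm_first: "adm ((k, m) # r) \<Longrightarrow> k \<le> m \<and> (\<forall>p\<in>set r. m < fst p \<and> fst p \<le> snd p)"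
proof (induction r arbitrary: k m)
  case Nil
  then show ?case by simp
next
  case (Cons p r)
  obtain k' m' where p: "p = (k', m')" by (cases p)
  have h: "k \<le> m" "m < k'" "adm ((k', m') # r)" using Cons(2) p by auto
  have "k' \<le> m' \<and> (\<forall>q\<in>set r. m' < fst q \<and> fst q \<le> snd q)" using Cons(1)[OF h(3)] .
  then show ?case using h p by force
qed

lemma adm_tail: "adm (p # r) \<Longrightarrow> adm r"
  by (cases p, cases r) auto

lemma adm_Cons: "k \<le> m \<Longrightarrow> adm r \<Longrightarrow> (\<forall>p\<in>set r. m < fst p) \<Longrightarrow> adm ((k, m) # r)"
  by (cases r) auto

lemma jam_vec_Nil: "jam_vec a [] = (\<lambda>j. 0)"
  by (simp add: jam_vec_def)

lemma jam_vec_Cons: "jam_vec a ((k, m) # r) = (\<lambda>j. (if j = k then (\<Sum>i=k..m. a i) else 0) + jam_vec a r j)"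
  by (simp add: jam_vec_def)

lemma adm_to_valid:
  "adm I \<Longrightarrow> \<exists>K e. valid K e \<and> K = fst ` set I \<and> (\<forall>p\<in>set I. e (fst p) = snd p) \<and> (\<forall>a. jam_vec a I = jv a K e)"
proof (induction I)
  case Nil
  then show ?case by (intro exI[of _ "{}"]) (auto simp: valid_def jam_vec_Nil jv_def)
next
  case (Cons p r)
  obtain k m where p: "p = (k, m)" by (cases p)
  have ar: "adm r" using Cons(2) adm_tail by blast
  have first: "k \<le> m" "\<forall>q\<in>set r. m < fst q \<and> fst q \<le> snd q" using adm_first Cons(2) p by blast+
  obtain K e where v: "valid K e" and K: "K = fst ` set r" and e: "\<forall>q\<in>set r. e (fst q) = snd q"
    and j: "\<forall>a. jam_vec a r = jv a K e"
    using Cons(1)[OF ar] by blast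
  have kK: "k \<notin> K" using K first by force
  have gt: "\<forall>k'\<in>K. m < k'" using K first by force
  define e' where "e' = e(k := m)"
  show ?case
  proof (intro exI conjI allI ballI)
    show "valid (insert k K) e'"
      unfolding valid_def
    proof (intro conjI ballI impI)
      show "finite (insert k K)" using v valid_def by auto
      fix x assume x: "x \<in> insert k K"
      show "x \<le> e' x" using x v first(1) kK unfolding valid_def e'_def by auto
      fix y assume y: "y \<in> insert k K" and xy: "x < y"
      show "e' x < y"
      proof (cases "x = k")
        case True
        then have "y \<in> K" using y xy by auto
        then show ?thesis using True gt by (simp add: e'_def)
      next
        case False
        then have xK: "x \<in> K" using x by auto
        have "y \<noteq> k" using gt xK xy first(1) by force
        then have "y \<in> K" using y by auto
        then show ?thesis using v xK xy False unfolding valid_def e'_def by auto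
      qed
    qed
    show "insert k K = fst ` set (p # r)" using K p by auto
    show "e' (fst q) = snd q" if "q \<in> set (p # r)" for q
      using that e p kK K unfolding e'_def by (auto)
    fix a
    show "jam_vec a (p # r) = jv a (insert k K) e'"
      unfolding p jam_vec_Cons using kK by (auto simp: fun_eq_iff j[rule_format] jv_def e'_def)
  qed
qed

lemma sorted_to_adm:
  "sorted_wrt (<) xs \<Longrightarrow> (\<forall>k\<in>set xs. k \<le> e k) \<Longrightarrow> (\<forall>k\<in>set xs. \<forall>k'\<in>set xs. k < k' \<longrightarrow> e k < k')
   \<Longrightarrow> adm (map (\<lambda>k. (k, e k)) xs) \<and> (\<forall>a. jam_vec a (map (\<lambda>k. (k, e k)) xs) = jv a (set xs) e)"
proof (induction xs)
  case Nil
  then show ?case by (simp add: jam_vec_Nil jv_def)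
next
  case (Cons x xs)
  have IH: "adm (map (\<lambda>k. (k, e k)) xs) \<and> (\<forall>a. jam_vec a (map (\<lambda>k. (k, e k)) xs) = jv a (set xs) e)"
    using Cons by auto
  have xn: "x \<notin> set xs" using Cons(2) by auto
  have "adm ((x, e x) # map (\<lambda>k. (k, e k)) xs)"
    by (rule adm_Cons) (use Cons(2-4) IH in auto)
  moreover have "jam_vec a ((x, e x) # map (\<lambda>k. (k, e k)) xs) = jv a (set (x # xs)) e" for a
    unfolding jam_vec_Cons using IH xn by (auto simp: jv_def fun_eq_iff)
  ultimately show ?case by simp
qed

lemma valid_to_adm: "valid K e \<Longrightarrow> \<exists>I. adm I \<and> (\<forall>a. jam_vec a I = jv a K e)"
proof -
  assume v: "valid K e"
  let ?xs = "sorted_list_of_set K"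
  have fK: "finite K" using v valid_def by blast
  have "adm (map (\<lambda>k. (k, e k)) ?xs) \<and> (\<forall>a. jam_vec a (map (\<lambda>k. (k, e k)) ?xs) = jv a (set ?xs) e)"
    by (rule sorted_to_adm) (use v fK in \<open>auto simp: valid_def\<close>)
  then show ?thesis using fK by auto
qed

lemma Jset_eq: "{N (jam_vec a I) | I. adm I} = {N (jv a K e) | K e. valid K e}"
proof
  show "{N (jam_vec a I) |I. adm I} \<subseteq> {N (jv a K e) |K e. valid K e}"
    using adm_to_valid by fastforce
  show "{N (jv a K e) |K e. valid K e} \<subseteq> {N (jam_vec a I) |I. adm I}"
  proof
    fix x assume "x \<in> {N (jv a K e) |K e. valid K e}"
    then obtain K e where v: "valid K e" and x: "x = N (jv a K e)" by blast
    obtain I where I: "adm I" "\<forall>a. jam_vec a I = jv a K e" using valid_to_adm[OF v] by blast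
    then have "x = N (jam_vec a I)" using x by simp
    then show "x \<in> {N (jam_vec a I) |I. adm I}" using I(1) by blast
  qed
qed

lemma Jnorm_alt: "Jnorm N a = Sup {N (jv a K e) | K e. valid K e}"
  unfolding Jnorm_def Jset_eq ..

lemma valid_empty: "valid {} e" by (simp add: valid_def)

lemma jv_empty: "jv a {} e = (\<lambda>j. 0)" by (simp add: jv_def)

lemma valid_finite: "valid K e \<Longrightarrow> finite K" by (simp add: valid_def)

lemma jv_fin: "valid K e \<Longrightarrow> fin_supp (jv a K e)"
  by (rule fin_supp_finite_set[of K]) (auto simp: valid_def jv_def)

lemma jv_add: "jv (\<lambda>i. a i + b i) K e = (\<lambda>j. jv a K e j + jv b K e j)"
  by (auto simp: jv_def sum.distrib)

lemma jv_scale: "jv (\<lambda>i. c * a i) K e = (\<lambda>j. c * jv a K e j)"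
  by (auto simp: jv_def sum_distrib_left)

lemma valid_disj: "valid K e \<Longrightarrow> k \<in> K \<Longrightarrow> k' \<in> K \<Longrightarrow> k \<le> i \<Longrightarrow> i \<le> e k \<Longrightarrow> k' \<le> i \<Longrightarrow> i \<le> e k' \<Longrightarrow> k = k'"
  unfolding valid_def by (metis leD le_trans linorder_neqE_nat)

lemma valid_disj2: "valid K e \<Longrightarrow> k \<in> K \<Longrightarrow> k' \<in> K \<Longrightarrow> k \<noteq> k' \<Longrightarrow> {k..e k} \<inter> {k'..e k'} = {}"
  using valid_disj[of K e k k'] by fastforce

lemma interval_l1:
  assumes v: "valid K e" and fa: "fin_supp a"
  shows "(\<Sum>k\<in>K. \<bar>\<Sum>i=k..e k. a i\<bar>) \<le> l1 a"
proof -
  have fK: "finite K" using v valid_def by blast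
  let ?U = "\<Union>k\<in>K. {k..e k}"
  let ?S = "{i. a i \<noteq> 0}"
  have fS: "finite ?S" using fa fin_supp_def by blast
  have fU: "finite ?U" using fK by auto
  have "(\<Sum>k\<in>K. \<bar>\<Sum>i=k..e k. a i\<bar>) \<le> (\<Sum>k\<in>K. \<Sum>i=k..e k. \<bar>a i\<bar>)"
    by (intro sum_mono sum_abs)
  also have "\<dots> = (\<Sum>i\<in>?U. \<bar>a i\<bar>)"
    by (rule sum.UNION_disjoint[symmetric]) (use fK valid_disj2[OF v] in auto)
  also have "\<dots> = (\<Sum>i\<in>?U \<inter> ?S. \<bar>a i\<bar>)"
    by (rule sum.mono_neutral_right) (use fU in auto)
  also have "\<dots> \<le> (\<Sum>i\<in>?S. \<bar>a i\<bar>)"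
    by (rule sum_mono2) (use fS in auto)
  finally show ?thesis unfolding l1_def .
qed

context
  fixes N :: "(nat \<Rightarrow> real) \<Rightarrow> real"
  assumes nb: "normalized_1unc_basis_norm N"
begin

lemma jv_l1: "valid K e \<Longrightarrow> fin_supp a \<Longrightarrow> N (jv a K e) \<le> l1 a"
proof -
  assume v: "valid K e" and fa: "fin_supp a"
  have "N (jv a K e) \<le> (\<Sum>k\<in>K. \<bar>jv a K e k\<bar>)"
    by (rule N_l1[OF nb]) (use v in \<open>auto simp: valid_def jv_def\<close>)
  also have "\<dots> = (\<Sum>k\<in>K. \<bar>\<Sum>i=k..e k. a i\<bar>)" by (simp add: jv_def)
  also have "\<dots> \<le> l1 a" by (rule interval_l1[OF v fa])
  finally show ?thesis .
qed

lemma JS_bdd: "fin_supp a \<Longrightarrow> bdd_above {N (jv a K e) | K e. valid K e}"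
  unfolding bdd_above_def using jv_l1 by blast

lemma JS_ne: "{N (jv a K e) | K e. valid K e} \<noteq> {}"
  using valid_empty by blast

lemma Jnorm_ge: "valid K e \<Longrightarrow> fin_supp a \<Longrightarrow> N (jv a K e) \<le> Jnorm N a"
  unfolding Jnorm_alt by (rule cSup_upper) (auto intro: JS_bdd)

lemma Jnorm_le: "(\<And>K e. valid K e \<Longrightarrow> N (jv a K e) \<le> B) \<Longrightarrow> Jnorm N a \<le> B"
  unfolding Jnorm_alt by (rule cSup_least[OF JS_ne]) auto

lemma Jnorm_l1: "fin_supp a \<Longrightarrow> Jnorm N a \<le> l1 a"
  by (rule Jnorm_le) (rule jv_l1)

lemma Jnorm_nonneg: "fin_supp a \<Longrightarrow> Jnorm N a \<ge> 0"
  using Jnorm_ge[OF valid_empty, of a] N_zero[OF nb] by (simp add: jv_empty)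

lemma Jnorm_interval: "fin_supp a \<Longrightarrow> k \<le> m \<Longrightarrow> \<bar>\<Sum>i=k..m. a i\<bar> \<le> Jnorm N a"
proof -
  assume fa: "fin_supp a" and km: "k \<le> m"
  have v: "valid {k} (\<lambda>_. m)" using km by (simp add: valid_def)
  have "jv a {k} (\<lambda>_. m) = (\<lambda>j. (\<Sum>i=k..m. a i) * unit_vec k j)"
    by (auto simp: jv_def unit_vec_def)
  then have "N (jv a {k} (\<lambda>_. m)) = \<bar>\<Sum>i=k..m. a i\<bar>"
    using N_hom[OF nb fin_supp_unit, of "\<Sum>i=k..m. a i" k] N_unit[OF nb] by (simp add: mult.commute)
  then show ?thesis using Jnorm_ge[OF v fa] by simp
qed

lemma Jnorm_coord: "fin_supp a \<Longrightarrow> \<bar>a j\<bar> \<le> Jnorm N a"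
  using Jnorm_interval[of a j j] by simp

lemma Jnorm_tsum: "fin_supp a \<Longrightarrow> \<bar>pairing (\<lambda>_. 1) a\<bar> \<le> Jnorm N a"
proof -
  assume fa: "fin_supp a"
  obtain L where L: "L \<ge> 1" "\<And>i. i \<ge> L \<Longrightarrow> a i = 0" using fin_supp_bound_ge[OF fa, of 1] by blast
  have "pairing (\<lambda>_. 1) a = (\<Sum>i<L. a i)" using pairing_lessThan[of L a] L by simp
  also have "\<dots> = (\<Sum>i=0..L-1. a i)" using L by (intro sum.cong) auto
  finally show ?thesis using Jnorm_interval[OF fa, of 0 "L - 1"] by simp
qed

lemma Jnorm_tri: "fin_supp a \<Longrightarrow> fin_supp b \<Longrightarrow> Jnorm N (\<lambda>i. a i + b i) \<le> Jnorm N a + Jnorm N b"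
proof (rule Jnorm_le)
  fix K e assume fa: "fin_supp a" and fb: "fin_supp b" and v: "valid K e"
  have "N (jv (\<lambda>i. a i + b i) K e) \<le> N (jv a K e) + N (jv b K e)"
    unfolding jv_add by (rule N_tri[OF nb jv_fin[OF v] jv_fin[OF v]])
  also have "\<dots> \<le> Jnorm N a + Jnorm N b" using Jnorm_ge[OF v fa] Jnorm_ge[OF v fb] by simp
  finally show "N (jv (\<lambda>i. a i + b i) K e) \<le> Jnorm N a + Jnorm N b" .
qed

lemma Jnorm_hom_le: "fin_supp a \<Longrightarrow> Jnorm N (\<lambda>i. c * a i) \<le> \<bar>c\<bar> * Jnorm N a"
proof (rule Jnorm_le)
  fix K e assume fa: "fin_supp a" and v: "valid K e"
  have "N (jv (\<lambda>i. c * a i) K e) = \<bar>c\<bar> * N (jv a K e)"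
    unfolding jv_scale by (rule N_hom[OF nb jv_fin[OF v]])
  also have "\<dots> \<le> \<bar>c\<bar> * Jnorm N a" using Jnorm_ge[OF v fa] by (simp add: mult_left_mono)
  finally show "N (jv (\<lambda>i. c * a i) K e) \<le> \<bar>c\<bar> * Jnorm N a" .
qed

lemma Jnorm_hom: "fin_supp a \<Longrightarrow> Jnorm N (\<lambda>i. c * a i) = \<bar>c\<bar> * Jnorm N a"
proof (cases "c = 0")
  case True
  assume fa: "fin_supp a"
  have "Jnorm N (\<lambda>i. 0) = 0"
    using Jnorm_hom_le[OF fin_supp_zero, of 0] Jnorm_nonneg[OF fin_supp_zero] by simp
  then show ?thesis using True by simp
next
  case False
  assume fa: "fin_supp a"
  have "Jnorm N a = Jnorm N (\<lambda>i. (1 / c) * (c * a i))" using False by simp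
  also have "\<dots> \<le> \<bar>1 / c\<bar> * Jnorm N (\<lambda>i. c * a i)"
    by (rule Jnorm_hom_le[OF fin_supp_scale[OF fa]])
  finally have "\<bar>c\<bar> * Jnorm N a \<le> Jnorm N (\<lambda>i. c * a i)"
    using False by (simp add: abs_divide field_simps)
  then show ?thesis using Jnorm_hom_le[OF fa, of c] by simp
qed

lemma Jnorm_zero: "Jnorm N (\<lambda>i. 0) = 0"
  using Jnorm_hom[OF fin_supp_zero, of 0] by simp

lemma Jnorm_uminus: "fin_supp a \<Longrightarrow> Jnorm N (\<lambda>i. - a i) = Jnorm N a"
  using Jnorm_hom[of a "-1"] by simp

lemma Jnorm_diff: "fin_supp a \<Longrightarrow> fin_supp b \<Longrightarrow> Jnorm N (\<lambda>i. a i - b i) \<le> Jnorm N a + Jnorm N b"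
  using Jnorm_tri[of a "\<lambda>i. - b i"] Jnorm_uminus[of b] fin_supp_uminus[of b] by simp

lemma Jnorm_unit: "Jnorm N (unit_vec j) \<le> 1"
proof -
  have "l1 (unit_vec j) = 1"
  proof -
    have "{i. unit_vec j i \<noteq> 0} = {j}" by (auto simp: unit_vec_def)
    then show ?thesis by (simp add: l1_def unit_vec_def)
  qed
  then show ?thesis using Jnorm_l1[of "unit_vec j"] by simp
qed

lemma Jnorm_head: "fin_supp a \<Longrightarrow> Jnorm N (\<lambda>i. if i < n then a i else 0) \<le> Jnorm N a"
proof (rule Jnorm_le)
  fix K e assume fa: "fin_supp a" and v: "valid K e"
  define K' where "K' = {k \<in> K. k < n}"
  define e' where "e' = (\<lambda>k. min (e k) (n - 1))"
  have v': "valid K' e'" using v unfolding valid_def K'_def e'_def by (auto intro: min.strict_coboundedI1)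
  have "jv (\<lambda>i. if i < n then a i else 0) K e = jv a K' e'"
  proof
    fix j
    show "jv (\<lambda>i. if i < n then a i else 0) K e j = jv a K' e' j"
    proof (cases "j \<in> K \<and> j < n")
      case True
      have "(\<Sum>i=j..e j. if i < n then a i else 0) = (\<Sum>i\<in>{j..e j} \<inter> {i. i < n}. a i)"
        by (simp add: sum.inter_restrict)
      also have "{j..e j} \<inter> {i. i < n} = {j..min (e j) (n - 1)}" using True by auto
      finally show ?thesis using True by (simp add: jv_def K'_def e'_def)
    next
      case False
      then show ?thesis by (auto simp: jv_def K'_def intro!: sum.neutral)
    qed
  qed
  then show "N (jv (\<lambda>i. if i < n then a i else 0) K e) \<le> Jnorm N a"
    using Jnorm_ge[OF v' fa] by simp
qed

lemma Jnorm_tail: "fin_supp a \<Longrightarrow> Jnorm N (\<lambda>i. if i < n then 0 else a i) \<le> 2 * Jnorm N a"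
proof -
  assume fa: "fin_supp a"
  have "(\<lambda>i. if i < n then 0 else a i) = (\<lambda>i. a i - (if i < n then a i else 0))" by auto
  then have "Jnorm N (\<lambda>i. if i < n then 0 else a i) \<le> Jnorm N a + Jnorm N (\<lambda>i. if i < n then a i else 0)"
    using Jnorm_diff[OF fa fin_supp_if[OF fa]] by simp
  then show ?thesis using Jnorm_head[OF fa, of n] by simp
qed

end


lemma pairing_one: "fin_supp a \<Longrightarrow> pairing f a = pairing (\<lambda>_. 1) (\<lambda>i. f i * a i)"
proof -
  assume fa: "fin_supp a"
  obtain L where L: "\<And>i. i \<ge> L \<Longrightarrow> a i = 0" using fa fin_suppE by blast
  show ?thesis
    by (subst (1 2) pairing_lessThan[of L]) (auto simp: L)
qed

lemma pairing_tail: "fin_supp a \<Longrightarrow> pairing (\<lambda>i. if i < n then 0 else f i) a = pairing f (\<lambda>i. if i < n then 0 else a i)"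
proof -
  assume fa: "fin_supp a"
  obtain L where L: "\<And>i. i \<ge> L \<Longrightarrow> a i = 0" using fa fin_suppE by blast
  show ?thesis
    by (subst (1 2) pairing_lessThan[of L]) (auto simp: L intro!: sum.cong)
qed

lemma l1_eq: "finite S \<Longrightarrow> (\<And>i. i \<notin> S \<Longrightarrow> x i = 0) \<Longrightarrow> l1 x = (\<Sum>i\<in>S. \<bar>x i\<bar>)"
  unfolding l1_def by (rule sum.mono_neutral_left) auto

locale seqn0 =
  fixes M :: "(nat \<Rightarrow> real) \<Rightarrow> real" and Cc Ct :: real
  assumes tri: "fin_supp a \<Longrightarrow> fin_supp b \<Longrightarrow> M (\<lambda>i. a i + b i) \<le> M a + M b"
    and hom: "fin_supp a \<Longrightarrow> M (\<lambda>i. c * a i) = \<bar>c\<bar> * M a"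
    and l1b: "fin_supp a \<Longrightarrow> M a \<le> l1 a"
    and coord: "fin_supp a \<Longrightarrow> \<bar>a j\<bar> \<le> Cc * M a"
    and tsum: "fin_supp a \<Longrightarrow> \<bar>pairing (\<lambda>_. 1) a\<bar> \<le> M a"
    and tail: "fin_supp a \<Longrightarrow> M (\<lambda>i. if i < n then 0 else a i) \<le> Ct * M a"
    and Ct: "Ct \<ge> 0" and Cc: "Cc \<ge> 0"
begin

lemma M0: "M (\<lambda>i. 0) = 0"
  using hom[OF fin_supp_zero, of 0] by simp

lemma Mnn: "fin_supp a \<Longrightarrow> M a \<ge> 0"
proof -
  assume fa: "fin_supp a"
  have "M (\<lambda>i. a i + (- a i)) \<le> M a + M (\<lambda>i. - a i)" by (rule tri[OF fa fin_supp_uminus[OF fa]])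
  then show ?thesis using hom[OF fa, of "-1"] M0 by simp
qed

lemma M_zero_imp: "fin_supp a \<Longrightarrow> M a = 0 \<Longrightarrow> a = (\<lambda>i. 0)"
proof
  fix j assume fa: "fin_supp a" and "M a = 0"
  then have "\<bar>a j\<bar> \<le> 0" using coord[OF fa, of j] by simp
  then show "a j = 0" by simp
qed

lemma dn_set_ne: "{\<bar>pairing f a\<bar> | a. fin_supp a \<and> M a \<le> 1} \<noteq> {}"
proof -
  have "\<bar>pairing f (\<lambda>i. 0)\<bar> \<in> {\<bar>pairing f a\<bar> | a. fin_supp a \<and> M a \<le> 1}"
    using M0 fin_supp_zero by fastforce
  then show ?thesis by blast
qed

lemma on_set_ne: "{M (\<lambda>i. f i * a i) | a. fin_supp a \<and> M a \<le> 1} \<noteq> {}"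
proof -
  have "M (\<lambda>i. f i * 0) \<in> {M (\<lambda>i. f i * a i) | a. fin_supp a \<and> M a \<le> 1}"
    using M0 fin_supp_zero by fastforce
  then show ?thesis by blast
qed

lemma dual_norm_ge: "f \<in> dual_space M \<Longrightarrow> fin_supp a \<Longrightarrow> M a \<le> 1 \<Longrightarrow> \<bar>pairing f a\<bar> \<le> dual_norm M f"
  unfolding dual_norm_def dual_space_def by (rule cSup_upper) auto

lemma dual_norm_le: "(\<And>a. fin_supp a \<Longrightarrow> M a \<le> 1 \<Longrightarrow> \<bar>pairing f a\<bar> \<le> B) \<Longrightarrow> dual_norm M f \<le> B"
  unfolding dual_norm_def by (rule cSup_least[OF dn_set_ne]) auto

lemma dual_space_I: "(\<And>a. fin_supp a \<Longrightarrow> M a \<le> 1 \<Longrightarrow> \<bar>pairing f a\<bar> \<le> B) \<Longrightarrow> f \<in> dual_space M"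
  unfolding dual_space_def bdd_above_def by blast

lemma dual_norm_nonneg: "f \<in> dual_space M \<Longrightarrow> dual_norm M f \<ge> 0"
  using dual_norm_ge[of f "\<lambda>i. 0"] M0 by simp

lemma op_norm_ge: "f \<in> Ldiag M \<Longrightarrow> fin_supp a \<Longrightarrow> M a \<le> 1 \<Longrightarrow> M (\<lambda>i. f i * a i) \<le> op_norm M f"
  unfolding op_norm_def Ldiag_def by (rule cSup_upper) auto

lemma op_norm_le: "(\<And>a. fin_supp a \<Longrightarrow> M a \<le> 1 \<Longrightarrow> M (\<lambda>i. f i * a i) \<le> B) \<Longrightarrow> op_norm M f \<le> B"
  unfolding op_norm_def by (rule cSup_least[OF on_set_ne]) auto

lemma Ldiag_I: "(\<And>a. fin_supp a \<Longrightarrow> M a \<le> 1 \<Longrightarrow> M (\<lambda>i. f i * a i) \<le> B) \<Longrightarrow> f \<in> Ldiag M"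
  unfolding Ldiag_def bdd_above_def by blast

lemma pairing_bound:
  assumes f: "f \<in> dual_space M" and fa: "fin_supp a"
  shows "\<bar>pairing f a\<bar> \<le> dual_norm M f * M a"
proof (cases "M a = 0")
  case True
  then have "a = (\<lambda>i. 0)" using M_zero_imp[OF fa] by simp
  then show ?thesis by (simp add: M0)
next
  case False
  then have pos: "M a > 0" using Mnn[OF fa] by simp
  define a' where "a' = (\<lambda>i. (1 / M a) * a i)"
  have "M a' = \<bar>1 / M a\<bar> * M a" unfolding a'_def by (rule hom[OF fa])
  then have "M a' = 1" using pos by simp
  moreover have fa': "fin_supp a'" unfolding a'_def by (rule fin_supp_scale[OF fa])
  ultimately have "\<bar>pairing f a'\<bar> \<le> dual_norm M f"
    using dual_norm_ge[OF f fa'] by simp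
  moreover have "pairing f a' = (1 / M a) * pairing f a" unfolding a'_def by (rule pairing_scale[OF fa])
  ultimately show ?thesis using pos by (simp add: abs_divide divide_le_eq)
qed

lemma op_bound:
  assumes f: "f \<in> Ldiag M" and fa: "fin_supp a"
  shows "M (\<lambda>i. f i * a i) \<le> op_norm M f * M a"
proof (cases "M a = 0")
  case True
  then have "a = (\<lambda>i. 0)" using M_zero_imp[OF fa] by simp
  then show ?thesis using M0 by simp
next
  case False
  then have pos: "M a > 0" using Mnn[OF fa] by simp
  define a' where "a' = (\<lambda>i. (1 / M a) * a i)"
  have "M a' = \<bar>1 / M a\<bar> * M a" unfolding a'_def by (rule hom[OF fa])
  then have "M a' = 1" using pos by simp
  moreover have fa': "fin_supp a'" unfolding a'_def by (rule fin_supp_scale[OF fa])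
  ultimately have "M (\<lambda>i. f i * a' i) \<le> op_norm M f"
    using op_norm_ge[OF f fa'] by simp
  moreover have "(\<lambda>i. f i * a' i) = (\<lambda>i. (1 / M a) * (f i * a i))" unfolding a'_def by auto
  ultimately have "(1 / M a) * M (\<lambda>i. f i * a i) \<le> op_norm M f"
    using hom[OF fin_supp_mult[OF fa], of "1 / M a" f] pos by simp
  then show ?thesis using pos by (simp add: field_simps)
qed

lemma Ldiag_sub: "f \<in> Ldiag M \<Longrightarrow> f \<in> dual_space M \<and> dual_norm M f \<le> op_norm M f"
proof -
  assume f: "f \<in> Ldiag M"
  have *: "\<bar>pairing f a\<bar> \<le> op_norm M f" if fa: "fin_supp a" and Ma: "M a \<le> 1" for a
  proof -
    have "\<bar>pairing f a\<bar> = \<bar>pairing (\<lambda>_. 1) (\<lambda>i. f i * a i)\<bar>" using pairing_one[OF fa] by simp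
    also have "\<dots> \<le> M (\<lambda>i. f i * a i)" by (rule tsum[OF fin_supp_mult[OF fa]])
    also have "\<dots> \<le> op_norm M f" by (rule op_norm_ge[OF f fa Ma])
    finally show ?thesis .
  qed
  show ?thesis using dual_space_I[OF *] dual_norm_le[OF *] by blast
qed

end

locale seqn = seqn0 +
  assumes diag: "f \<in> dual_space M \<Longrightarrow> fin_supp a \<Longrightarrow> M (\<lambda>i. f i * a i) \<le> 2 * dual_norm M f * M a"
begin

lemma dual_sub: "f \<in> dual_space M \<Longrightarrow> f \<in> Ldiag M \<and> op_norm M f \<le> 2 * dual_norm M f"
proof -
  assume f: "f \<in> dual_space M"
  have *: "M (\<lambda>i. f i * a i) \<le> 2 * dual_norm M f" if fa: "fin_supp a" and Ma: "M a \<le> 1" for a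
  proof -
    have "M (\<lambda>i. f i * a i) \<le> 2 * dual_norm M f * M a" by (rule diag[OF f fa])
    also have "\<dots> \<le> 2 * dual_norm M f * 1"
      using Ma dual_norm_nonneg[OF f] by (intro mult_left_mono) auto
    finally show ?thesis by simp
  qed
  show ?thesis using Ldiag_I[OF *] op_norm_le[OF *] by blast
qed

theorem Ldiag_eq: "Ldiag M = dual_space M"
  using Ldiag_sub dual_sub by blast

theorem norm_equiv: "\<exists>c d. 0 \<le> c \<and> 0 \<le> d \<and> c * d \<le> 2 \<and>
         (\<forall>lam\<in>Ldiag M. dual_norm M lam \<le> c * op_norm M lam \<and> op_norm M lam \<le> d * dual_norm M lam)"
  using Ldiag_sub dual_sub by (intro exI[of _ 1] exI[of _ 2]) auto

lemma tail_dual: "f \<in> dual_space M \<Longrightarrow> (\<lambda>i. if i < n then 0 else f i) \<in> dual_space M"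
proof (rule dual_space_I)
  fix a assume f: "f \<in> dual_space M" and fa: "fin_supp a" and Ma: "M a \<le> 1"
  have "\<bar>pairing (\<lambda>i. if i < n then 0 else f i) a\<bar> = \<bar>pairing f (\<lambda>i. if i < n then 0 else a i)\<bar>"
    using pairing_tail[OF fa] by simp
  also have "\<dots> \<le> dual_norm M f * M (\<lambda>i. if i < n then 0 else a i)"
    by (rule pairing_bound[OF f fin_supp_if2[OF fa]])
  also have "\<dots> \<le> dual_norm M f * (Ct * 1)"
  proof (rule mult_left_mono)
    show "M (\<lambda>i. if i < n then 0 else a i) \<le> Ct * 1"
      using tail[OF fa, of n] Ma Ct by (meson mult_left_mono order_trans)
  qed (rule dual_norm_nonneg[OF f])
  finally show "\<bar>pairing (\<lambda>i. if i < n then 0 else f i) a\<bar> \<le> dual_norm M f * Ct" by simp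
qed

lemma Kdiag_sub: "f \<in> Kdiag M \<Longrightarrow> f \<in> cspan_dual M"
proof -
  assume fK: "f \<in> Kdiag M"
  have fL: "f \<in> Ldiag M" using fK Kdiag_def by blast
  have fD: "f \<in> dual_space M" using Ldiag_sub[OF fL] by blast
  have "(\<lambda>n. dual_norm M (\<lambda>i. if i < n then 0 else f i)) \<longlonglongrightarrow> 0"
  proof (rule LIMSEQ_I)
    fix r :: real assume r: "r > 0"
    define \<epsilon> where "\<epsilon> = r / (Ct + 1)"
    have \<epsilon>: "\<epsilon> > 0" using r Ct by (simp add: \<epsilon>_def)
    have Ce: "Ct * \<epsilon> < r" using r Ct by (simp add: \<epsilon>_def field_simps)
    obtain F where fF: "finite F" and Fs: "\<forall>b\<in>F. fin_supp b"
      and net: "\<forall>a. fin_supp a \<and> M a \<le> 1 \<longrightarrow> (\<exists>b\<in>F. M (\<lambda>i. f i * a i - b i) < \<epsilon>)"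
      using fK \<epsilon> unfolding Kdiag_def by blast
    have "\<forall>b\<in>F. \<exists>L. \<forall>i\<ge>L. b i = 0" using Fs fin_supp_iff by blast
    then obtain Lf where Lf: "\<And>b i. b \<in> F \<Longrightarrow> i \<ge> Lf b \<Longrightarrow> b i = 0" by metis
    define n0 where "n0 = (\<Sum>b\<in>F. Lf b)"
    have n0: "b \<in> F \<Longrightarrow> Lf b \<le> n0" for b unfolding n0_def using fF by (auto intro: member_le_sum)
    show "\<exists>no. \<forall>n\<ge>no. norm (dual_norm M (\<lambda>i. if i < n then 0 else f i) - 0) < r"
    proof (intro exI allI impI)
      fix n assume n: "n \<ge> n0"
      have "dual_norm M (\<lambda>i. if i < n then 0 else f i) \<le> Ct * \<epsilon>"
      proof (rule dual_norm_le)
        fix a assume fa: "fin_supp a" and Ma: "M a \<le> 1"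
        obtain b where bF: "b \<in> F" and bM: "M (\<lambda>i. f i * a i - b i) < \<epsilon>" using net fa Ma by blast
        have fb: "fin_supp b" using Fs bF by blast
        have "pairing (\<lambda>i. if i < n then 0 else f i) a
              = pairing (\<lambda>_. 1) (\<lambda>i. (if i < n then 0 else f i) * a i)" by (rule pairing_one[OF fa])
        also have "(\<lambda>i. (if i < n then 0 else f i) * a i) = (\<lambda>i. if i < n then 0 else (f i * a i - b i))"
          using Lf[OF bF] n0[OF bF] n by (auto simp: fun_eq_iff)
        finally have "\<bar>pairing (\<lambda>i. if i < n then 0 else f i) a\<bar> \<le> M (\<lambda>i. if i < n then 0 else (f i * a i - b i))"
          using tsum[OF fin_supp_if2[OF fin_supp_diff[OF fin_supp_mult[OF fa] fb]]] by simp
        also have "\<dots> \<le> Ct * M (\<lambda>i. f i * a i - b i)"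
          by (rule tail[OF fin_supp_diff[OF fin_supp_mult[OF fa] fb]])
        also have "\<dots> \<le> Ct * \<epsilon>" using bM Ct by (simp add: mult_left_mono)
        finally show "\<bar>pairing (\<lambda>i. if i < n then 0 else f i) a\<bar> \<le> Ct * \<epsilon>" .
      qed
      moreover have "dual_norm M (\<lambda>i. if i < n then 0 else f i) \<ge> 0"
        by (rule dual_norm_nonneg[OF tail_dual[OF fD]])
      ultimately show "norm (dual_norm M (\<lambda>i. if i < n then 0 else f i) - 0) < r" using Ce by simp
    qed
  qed
  then show ?thesis using fD unfolding cspan_dual_def by blast
qed

lemma cspan_sub: "f \<in> cspan_dual M \<Longrightarrow> f \<in> Kdiag M"
proof -
  assume fc: "f \<in> cspan_dual M"
  have fD: "f \<in> dual_space M" and lim: "(\<lambda>n. dual_norm M (\<lambda>i. if i < n then 0 else f i)) \<longlonglongrightarrow> 0"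
    using fc unfolding cspan_dual_def by auto
  have fL: "f \<in> Ldiag M" using dual_sub[OF fD] by blast
  have "\<exists>F. finite F \<and> (\<forall>b\<in>F. fin_supp b) \<and>
      (\<forall>a. fin_supp a \<and> M a \<le> 1 \<longrightarrow> (\<exists>b\<in>F. M (\<lambda>i. f i * a i - b i) < \<epsilon>))" if \<epsilon>: "\<epsilon> > 0" for \<epsilon>
  proof -
    obtain n where n: "norm (dual_norm M (\<lambda>i. if i < n then 0 else f i) - 0) < \<epsilon> / 4"
      using LIMSEQ_D[OF lim, of "\<epsilon> / 4"] \<epsilon> by auto
    let ?g = "\<lambda>i. if i < n then 0 else f i"
    have gD: "?g \<in> dual_space M" by (rule tail_dual[OF fD])
    have gn: "dual_norm M ?g < \<epsilon> / 4" using n dual_norm_nonneg[OF gD] by simp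
    define B where "B = (\<Sum>i<n. \<bar>f i\<bar>) * Cc"
    define \<delta> where "\<delta> = \<epsilon> / (2 * (real n + 1))"
    have \<delta>: "\<delta> > 0" using \<epsilon> by (simp add: \<delta>_def)
    define Kb :: int where "Kb = \<lceil>B / \<delta>\<rceil> + 1"
    define G where "G = (\<lambda>xs. \<lambda>i. if i < n then \<delta> * of_int (xs ! i) else 0) ` {xs. set xs \<subseteq> {-Kb..Kb} \<and> length xs = n}"
    show ?thesis
    proof (intro exI conjI allI impI ballI)
      show "finite G" unfolding G_def by (rule finite_imageI, rule finite_lists_length_eq) simp
      show "fin_supp b" if "b \<in> G" for b using that unfolding G_def by (auto intro: fin_supp_below)
      fix a assume "fin_supp a \<and> M a \<le> 1"
      then have fa: "fin_supp a" and Ma: "M a \<le> 1" by auto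
      define H where "H = (\<lambda>i. if i < n then f i * a i else 0)"
      define xs where "xs = map (\<lambda>i. round (H i / \<delta>)) [0..<n]"
      define b where "b = (\<lambda>i. if i < n then \<delta> * of_int (xs ! i) else 0)"
      have Hb: "\<bar>H i\<bar> \<le> B" for i
      proof (cases "i < n")
        case True
        have "\<bar>a i\<bar> \<le> Cc * M a" by (rule coord[OF fa])
        also have "\<dots> \<le> Cc" using Ma Mnn[OF fa] Cc by (simp add: mult_left_le)
        finally have ai: "\<bar>a i\<bar> \<le> Cc" .
        have "\<bar>f i\<bar> \<le> (\<Sum>i<n. \<bar>f i\<bar>)"
          using True by (intro member_le_sum) auto
        then have "\<bar>f i\<bar> * \<bar>a i\<bar> \<le> (\<Sum>i<n. \<bar>f i\<bar>) * Cc"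
          using ai Cc by (intro mult_mono) auto
        then show ?thesis using True by (simp add: H_def B_def abs_mult)
      next
        case False
        have "B \<ge> 0" unfolding B_def using Cc by (simp add: sum_nonneg)
        then show ?thesis using False by (simp add: H_def)
      qed
      have bG: "b \<in> G" unfolding G_def b_def
      proof (rule imageI, safe)
        fix x assume "x \<in> set xs"
        then obtain i where i: "i < n" "x = round (H i / \<delta>)" unfolding xs_def by auto
        have "of_int x \<le> H i / \<delta> + 1/2" using i of_int_round_le by simp
        also have "\<dots> \<le> B / \<delta> + 1/2" using Hb[of i] \<delta> by (simp add: divide_right_mono)
        also have "\<dots> \<le> of_int Kb" unfolding Kb_def by linarith
        finally have u: "x \<le> Kb" by linarith
        have "of_int x \<ge> H i / \<delta> - 1/2" using i of_int_round_ge by simp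
        moreover have "H i / \<delta> \<ge> - B / \<delta>"
        proof -
          have "- B \<le> H i" using Hb[of i] by (simp add: abs_le_iff)
          then have "(- B) / \<delta> \<le> H i / \<delta>" using \<delta> by (intro divide_right_mono) auto
          then show ?thesis by simp
        qed
        moreover have "- B / \<delta> - 1/2 \<ge> - of_int Kb" unfolding Kb_def by linarith
        ultimately have l: "x \<ge> - Kb" by linarith
        show "x \<in> {-Kb..Kb}" using u l by simp
      next
        show "length xs = n" by (simp add: xs_def)
      qed
      have diff: "\<bar>H i - b i\<bar> \<le> \<delta> / 2" if "i < n" for i
      proof -
        have "b i = \<delta> * of_int (round (H i / \<delta>))" using that by (simp add: b_def xs_def)
        moreover have "\<bar>of_int (round (H i / \<delta>)) - H i / \<delta>\<bar> \<le> 1/2" by (rule of_int_round_abs_le)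
        moreover have "H i - \<delta> * of_int (round (H i / \<delta>)) = - \<delta> * (of_int (round (H i / \<delta>)) - H i / \<delta>)"
          using \<delta> by (simp add: field_simps)
        ultimately have "\<bar>H i - b i\<bar> = \<delta> * \<bar>of_int (round (H i / \<delta>)) - H i / \<delta>\<bar>"
          using \<delta> by (simp add: abs_mult)
        also have "\<dots> \<le> \<delta> * (1/2)" using \<delta> \<open>\<bar>of_int (round (H i / \<delta>)) - H i / \<delta>\<bar> \<le> 1/2\<close> by (intro mult_left_mono) auto
        finally show ?thesis by simp
      qed
      have fH: "fin_supp H" unfolding H_def by (rule fin_supp_below)
      have fb: "fin_supp b" unfolding b_def by (rule fin_supp_below)
      have "M (\<lambda>i. H i - b i) \<le> l1 (\<lambda>i. H i - b i)" by (rule l1b[OF fin_supp_diff[OF fH fb]])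
      also have "\<dots> = (\<Sum>i<n. \<bar>H i - b i\<bar>)" by (rule l1_eq) (auto simp: H_def b_def)
      also have "\<dots> \<le> (\<Sum>i<n. \<delta> / 2)" by (rule sum_mono) (use diff in auto)
      also have "\<dots> = real n * \<delta> / 2" by simp
      also have "\<dots> < \<epsilon> / 2"
      proof -
        have "real n * \<delta> / 2 = \<epsilon> / 2 * (real n / (2 * (real n + 1)))" by (simp add: \<delta>_def field_simps)
        also have "\<dots> < \<epsilon> / 2 * 1" using \<epsilon> by (intro mult_strict_left_mono) (auto simp: field_simps)
        finally show ?thesis by simp
      qed
      finally have M1: "M (\<lambda>i. H i - b i) < \<epsilon> / 2" .
      have "M (\<lambda>i. ?g i * a i) \<le> 2 * dual_norm M ?g * M a" by (rule diag[OF gD fa])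
      also have "\<dots> \<le> 2 * dual_norm M ?g * 1"
        using Ma dual_norm_nonneg[OF gD] by (intro mult_left_mono) auto
      also have "\<dots> \<le> \<epsilon> / 2" using gn by simp
      finally have M2: "M (\<lambda>i. ?g i * a i) \<le> \<epsilon> / 2" .
      have "(\<lambda>i. f i * a i - b i) = (\<lambda>i. (H i - b i) + ?g i * a i)"
        by (auto simp: H_def b_def fun_eq_iff)
      then have "M (\<lambda>i. f i * a i - b i) \<le> M (\<lambda>i. H i - b i) + M (\<lambda>i. ?g i * a i)"
        using tri[OF fin_supp_diff[OF fH fb] fin_supp_mult[OF fa]] by simp
      then show "\<exists>b\<in>G. M (\<lambda>i. f i * a i - b i) < \<epsilon>" using M1 M2 bG by force
    qed
  qed
  then show ?thesis using fL unfolding Kdiag_def by blast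
qed

theorem Kdiag_eq: "Kdiag M = cspan_dual M"
  using Kdiag_sub cspan_sub by blast

theorem RI_eq: "RI_Kdiag M = R_one_cspan_dual M"
proof
  show "RI_Kdiag M \<subseteq> R_one_cspan_dual M"
  proof
    fix lam assume "lam \<in> RI_Kdiag M"
    then obtain c \<mu> where mu: "\<mu> \<in> Kdiag M" and lam: "lam = (\<lambda>i. c + \<mu> i)" unfolding RI_Kdiag_def by blast
    have "(\<lambda>i. lam i - c) = \<mu>" using lam by auto
    then show "lam \<in> R_one_cspan_dual M" using Kdiag_sub[OF mu] unfolding R_one_cspan_dual_def by auto
  qed
  show "R_one_cspan_dual M \<subseteq> RI_Kdiag M"
  proof
    fix f assume "f \<in> R_one_cspan_dual M"
    then obtain c where c: "(\<lambda>i. f i - c) \<in> cspan_dual M" unfolding R_one_cspan_dual_def by blast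
    have "f = (\<lambda>i. c + (f i - c))" by auto
    then show "f \<in> RI_Kdiag M" using cspan_sub[OF c] unfolding RI_Kdiag_def by blast
  qed
qed

end


definition owner :: "nat set \<Rightarrow> (nat \<Rightarrow> nat) \<Rightarrow> nat \<Rightarrow> nat" where
  "owner Q r k = (THE q. q \<in> Q \<and> q \<le> k \<and> k \<le> r q)"

lemma owner_eq: "valid Q r \<Longrightarrow> q \<in> Q \<Longrightarrow> q \<le> k \<Longrightarrow> k \<le> r q \<Longrightarrow> owner Q r k = q"
  unfolding owner_def by (rule the_equality) (auto dest: valid_disj)

lemma isum: fixes a :: "nat \<Rightarrow> real" shows "(\<Sum>i=q..R. if k \<le> i \<and> i \<le> E then a i else 0) = (\<Sum>i=max q k..min R E. a i)"
proof -
  have "(\<Sum>i=q..R. if k \<le> i \<and> i \<le> E then a i else 0) = (\<Sum>i\<in>{q..R} \<inter> {i. k \<le> i \<and> i \<le> E}. a i)"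
    unfolding sum.inter_restrict[OF finite_atLeastAtMost] by simp
  also have "{q..R} \<inter> {i. k \<le> i \<and> i \<le> E} = {max q k..min R E}" by auto
  finally show ?thesis .
qed

lemma swap_if:
  fixes a g :: "nat \<Rightarrow> real"
  assumes "finite I" "finite K"
  shows "(\<Sum>i\<in>I. a i * (\<Sum>k\<in>K. if P k i then g k else 0)) = (\<Sum>k\<in>K. g k * (\<Sum>i\<in>I. if P k i then a i else 0))"
proof -
  have "(\<Sum>i\<in>I. a i * (\<Sum>k\<in>K. if P k i then g k else 0)) = (\<Sum>i\<in>I. \<Sum>k\<in>K. if P k i then g k * a i else 0)"
    by (auto simp: sum_distrib_left intro!: sum.cong)
  also have "\<dots> = (\<Sum>k\<in>K. \<Sum>i\<in>I. if P k i then g k * a i else 0)" by (rule sum.swap)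
  also have "\<dots> = (\<Sum>k\<in>K. g k * (\<Sum>i\<in>I. if P k i then a i else 0))"
    by (auto simp: sum_distrib_left intro!: sum.cong)
  finally show ?thesis .
qed

context
  fixes N :: "(nat \<Rightarrow> real) \<Rightarrow> real"
  assumes nb: "normalized_1unc_basis_norm N"
begin

lemma J_seqn0: "seqn0 (Jnorm N) 1 2"
  by unfold_locales (auto intro: Jnorm_tri[OF nb] Jnorm_l1[OF nb] Jnorm_tsum[OF nb] Jnorm_tail[OF nb]
      simp: Jnorm_hom[OF nb] Jnorm_coord[OF nb])

lemma g_unit: "(\<forall>d. (\<forall>i\<ge>L. d i = 0) \<longrightarrow> \<bar>pairing g d\<bar> \<le> N d) \<Longrightarrow> k < L \<Longrightarrow> \<bar>g k\<bar> \<le> 1"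
  using N_unit[OF nb, of k] by (metis leD pairing_unit unit_vec_def)

lemma block_mult:
  assumes fa: "fin_supp a" and v: "valid K e"
    and gb: "\<And>k. k \<in> K \<Longrightarrow> \<bar>g k\<bar> \<le> 1"
    and gd: "\<And>d. (\<And>i. i \<notin> K \<Longrightarrow> d i = 0) \<Longrightarrow> \<bar>pairing g d\<bar> \<le> N d"
  shows "Jnorm N (\<lambda>i. a i * (\<Sum>k\<in>K. if k \<le> i \<and> i \<le> e k then g k else 0)) \<le> 2 * Jnorm N a"
proof (rule Jnorm_le[OF nb])
  define b where "b = (\<lambda>i. a i * (\<Sum>k\<in>K. if k \<le> i \<and> i \<le> e k then g k else 0))"
  have fK: "finite K" using v valid_finite by blast
  fix Q r assume vQ: "valid Q r"
  have fQ: "finite Q" using vQ valid_finite by blast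
  define X where "X = (\<lambda>q. if q \<in> Q then (\<Sum>i=q..r q. a i * (\<Sum>k\<in>K. if q \<le> k \<and> k \<le> i \<and> i \<le> e k then g k else 0)) else 0)"
  define Y where "Y = (\<lambda>q. if q \<in> Q then (\<Sum>i=q..r q. a i * (\<Sum>k\<in>K. if k < q \<and> k \<le> i \<and> i \<le> e k then g k else 0)) else 0)"
  have fX: "fin_supp X" unfolding X_def by (rule fin_supp_finite_set[OF fQ]) auto
  have fY: "fin_supp Y" unfolding Y_def by (rule fin_supp_finite_set[OF fQ]) auto
  have split: "jv b Q r = (\<lambda>q. X q + Y q)"
  proof
    fix q
    have inner: "(\<Sum>k\<in>K. if k \<le> i \<and> i \<le> e k then g k else 0)
        = (\<Sum>k\<in>K. if q \<le> k \<and> k \<le> i \<and> i \<le> e k then g k else 0) + (\<Sum>k\<in>K. if k < q \<and> k \<le> i \<and> i \<le> e k then g k else 0)" for i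
      unfolding sum.distrib[symmetric] by (rule sum.cong) auto
    have "(\<Sum>i=q..r q. b i) = (\<Sum>i=q..r q. a i * (\<Sum>k\<in>K. if q \<le> k \<and> k \<le> i \<and> i \<le> e k then g k else 0)
       + a i * (\<Sum>k\<in>K. if k < q \<and> k \<le> i \<and> i \<le> e k then g k else 0))"
      unfolding b_def by (intro sum.cong refl) (simp only: inner distrib_left)
    also have "\<dots> = (\<Sum>i=q..r q. a i * (\<Sum>k\<in>K. if q \<le> k \<and> k \<le> i \<and> i \<le> e k then g k else 0))
       + (\<Sum>i=q..r q. a i * (\<Sum>k\<in>K. if k < q \<and> k \<le> i \<and> i \<le> e k then g k else 0))"
      by (rule sum.distrib)
    finally have "(\<Sum>i=q..r q. b i) = (\<Sum>i=q..r q. a i * (\<Sum>k\<in>K. if q \<le> k \<and> k \<le> i \<and> i \<le> e k then g k else 0))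
       + (\<Sum>i=q..r q. a i * (\<Sum>k\<in>K. if k < q \<and> k \<le> i \<and> i \<le> e k then g k else 0))" .
    then show "jv b Q r q = X q + Y q"
      unfolding jv_def X_def Y_def by simp
  qed
  define own where "own = owner K e"
  define cond where "cond = (\<lambda>q. own q \<in> K \<and> own q < q \<and> q \<le> e (own q))"
  define Q' where "Q' = {q \<in> Q. cond q}"
  define r' where "r' = (\<lambda>q. min (r q) (e (own q)))"
  have vQ': "valid Q' r'"
    using vQ unfolding valid_def Q'_def r'_def cond_def
    by (auto intro: min.coboundedI1 le_less_trans)
  have Yq: "Y q = (if q \<in> Q \<and> cond q then g (own q) * (\<Sum>i=q..min (r q) (e (own q)). a i) else 0)" for q
  proof (cases "q \<in> Q")
    case False then show ?thesis by (simp add: Y_def)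
  next
    case True
    have "Y q = (\<Sum>k\<in>K. g k * (\<Sum>i=q..r q. if k < q \<and> k \<le> i \<and> i \<le> e k then a i else 0))"
      using True fK unfolding Y_def by (simp only: if_True, intro swap_if) auto
    also have "\<dots> = (\<Sum>k\<in>K. if own q = k then (if cond q then g (own q) * (\<Sum>i=q..min (r q) (e (own q)). a i) else 0) else 0)"
    proof (rule sum.cong[OF refl])
      fix k assume kK: "k \<in> K"
      show "g k * (\<Sum>i=q..r q. if k < q \<and> k \<le> i \<and> i \<le> e k then a i else 0)
         = (if own q = k then (if cond q then g (own q) * (\<Sum>i=q..min (r q) (e (own q)). a i) else 0) else 0)"
      proof (cases "k < q")
        case False then show ?thesis
          using kK by (auto simp: cond_def)
      next
        case kq: True
        have s: "(\<Sum>i=q..r q. if k < q \<and> k \<le> i \<and> i \<le> e k then a i else 0) = (\<Sum>i=q..min (r q) (e k). a i)"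
          using isum[where a=a and q=q and R="r q" and k=k and E="e k"] kq by (simp add: max_def)
        show ?thesis
        proof (cases "q \<le> e k")
          case True
          then have "own q = k" unfolding own_def using owner_eq[OF v kK] kq by simp
          then show ?thesis using s kK kq True by (simp add: cond_def)
        next
          case False
          then have "(\<Sum>i=q..min (r q) (e k). a i) = 0" by simp
          moreover have "own q = k \<Longrightarrow> \<not> cond q" using False by (simp add: cond_def)
          ultimately show ?thesis using s by simp
        qed
      qed
    qed
    also have "\<dots> = (if cond q then g (own q) * (\<Sum>i=q..min (r q) (e (own q)). a i) else 0)"
      using fK by (simp add: cond_def)
    finally show ?thesis using True by simp
  qed
  have NY: "N Y \<le> Jnorm N a"
  proof -
    have "N Y \<le> N (jv a Q' r')"
    proof (rule N_mono[OF nb jv_fin[OF vQ']])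
      fix q
      show "\<bar>Y q\<bar> \<le> \<bar>jv a Q' r' q\<bar>"
      proof (cases "q \<in> Q \<and> cond q")
        case True
        have "\<bar>g (own q)\<bar> \<le> 1" using gb True by (simp add: cond_def)
        then have "\<bar>g (own q)\<bar> * \<bar>\<Sum>i=q..min (r q) (e (own q)). a i\<bar> \<le> \<bar>\<Sum>i=q..min (r q) (e (own q)). a i\<bar>"
          by (simp add: mult_left_le_one_le)
        then show ?thesis using True by (simp add: Yq jv_def Q'_def r'_def abs_mult)
      next
        case False then have "Y q = 0" unfolding Yq by (intro if_not_P) then show ?thesis by simp
      qed
    qed
    also have "\<dots> \<le> Jnorm N a" by (rule Jnorm_ge[OF nb vQ' fa])
    finally show ?thesis .
  qed
  define ow where "ow = owner Q r"
  define K'' where "K'' = {k \<in> K. ow k \<in> Q \<and> ow k \<le> k \<and> k \<le> r (ow k)}"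
  define e'' where "e'' = (\<lambda>k. min (e k) (r (ow k)))"
  have vK'': "valid K'' e''"
    using v unfolding valid_def K''_def e''_def
    by (auto intro: min.coboundedI1 le_less_trans)
  define v' where "v' = jv a K'' e''"
  have Xq: "X q = (\<Sum>k\<in>K. if k \<in> K'' \<and> ow k = q then g k * v' k else 0)" for q
  proof (cases "q \<in> Q")
    case False
    have "\<And>k. k \<in> K'' \<Longrightarrow> ow k \<noteq> q" using False by (auto simp: K''_def)
    then have "(\<Sum>k\<in>K. if k \<in> K'' \<and> ow k = q then g k * v' k else 0) = 0" by (intro sum.neutral) auto
    then show ?thesis using False by (simp add: X_def)
  next
    case True
    have "X q = (\<Sum>k\<in>K. g k * (\<Sum>i=q..r q. if q \<le> k \<and> k \<le> i \<and> i \<le> e k then a i else 0))"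
      using True fK unfolding X_def by (simp only: if_True, intro swap_if) auto
    also have "\<dots> = (\<Sum>k\<in>K. if k \<in> K'' \<and> ow k = q then g k * v' k else 0)"
    proof (rule sum.cong[OF refl])
      fix k assume kK: "k \<in> K"
      show "g k * (\<Sum>i=q..r q. if q \<le> k \<and> k \<le> i \<and> i \<le> e k then a i else 0)
          = (if k \<in> K'' \<and> ow k = q then g k * v' k else 0)"
      proof (cases "q \<le> k \<and> k \<le> r q")
        case True
        then have o: "ow k = q" unfolding ow_def using owner_eq[OF vQ \<open>q \<in> Q\<close>] by simp
        then have kK'': "k \<in> K''" using kK True \<open>q \<in> Q\<close> by (simp add: K''_def)
        have "(\<Sum>i=q..r q. if q \<le> k \<and> k \<le> i \<and> i \<le> e k then a i else 0) = (\<Sum>i=k..min (r q) (e k). a i)"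
          using isum[where a=a and q=q and R="r q" and k=k and E="e k"] True by (simp add: max_def)
        then show ?thesis using o kK'' by (simp add: v'_def jv_def e''_def min.commute)
      next
        case False
        have "(\<Sum>i=q..r q. if q \<le> k \<and> k \<le> i \<and> i \<le> e k then a i else 0) = 0"
          using False by (intro sum.neutral) auto
        moreover have "\<not> (k \<in> K'' \<and> ow k = q)" using False by (auto simp: K''_def)
        ultimately show ?thesis by (subst if_not_P) auto
      qed
    qed
    finally show ?thesis .
  qed
  have NX: "N X \<le> Jnorm N a"
  proof -
    obtain L where L0: "L \<ge> Suc (\<Sum>q\<in>Q. q)" and L: "\<And>i. i \<ge> L \<Longrightarrow> X i = 0"
      using fin_supp_bound_ge[OF fX] by blast
    obtain h where hb: "\<forall>d. (\<forall>i\<ge>L. d i = 0) \<longrightarrow> \<bar>pairing h d\<bar> \<le> N d" and hX: "pairing h X = N X"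
      using HB[OF nb fX, of L] by blast
    have hQ: "\<bar>h q\<bar> \<le> 1" if "q \<in> Q" for q
    proof -
      have "q \<le> (\<Sum>q\<in>Q. q)" using that fQ by (intro member_le_sum) auto
      then have "q < L" using L0 by simp
      then show ?thesis using g_unit[OF hb] by simp
    qed
    define w where "w = (\<lambda>k. if k \<in> K'' then h (ow k) * v' k else 0)"
    have "N X = pairing h X" using hX by simp
    also have "pairing h X = (\<Sum>q\<in>Q. h q * X q)" by (rule pairing_eq[OF fQ]) (auto simp: X_def)
    also have "\<dots> = (\<Sum>q\<in>Q. \<Sum>k\<in>K. if k \<in> K'' \<and> ow k = q then h q * (g k * v' k) else 0)"
      by (simp add: Xq sum_distrib_left if_distrib cong: if_cong)
    also have "\<dots> = (\<Sum>k\<in>K. \<Sum>q\<in>Q. if k \<in> K'' \<and> ow k = q then h q * (g k * v' k) else 0)"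
      by (rule sum.swap)
    also have "\<dots> = (\<Sum>k\<in>K. g k * w k)"
    proof (rule sum.cong[OF refl])
      fix k assume "k \<in> K"
      have "(\<Sum>q\<in>Q. if k \<in> K'' \<and> ow k = q then h q * (g k * v' k) else 0)
          = (\<Sum>q\<in>Q. if ow k = q then (if k \<in> K'' then h q * (g k * v' k) else 0) else 0)"
        by (rule sum.cong) auto
      also have "\<dots> = (if ow k \<in> Q then (if k \<in> K'' then h (ow k) * (g k * v' k) else 0) else 0)"
        using fQ by simp
      also have "\<dots> = g k * w k" by (auto simp: w_def K''_def)
      finally show "(\<Sum>q\<in>Q. if k \<in> K'' \<and> ow k = q then h q * (g k * v' k) else 0) = g k * w k" .
    qed
    also have "\<dots> = pairing g w" by (rule pairing_eq[OF fK, symmetric]) (auto simp: w_def K''_def)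
    also have "\<dots> \<le> \<bar>pairing g w\<bar>" by simp
    also have "\<dots> \<le> N w" by (rule gd) (auto simp: w_def K''_def)
    also have "\<dots> \<le> N v'"
    proof (rule N_mono[OF nb])
      show "fin_supp v'" unfolding v'_def by (rule jv_fin[OF vK''])
      fix k show "\<bar>w k\<bar> \<le> \<bar>v' k\<bar>"
      proof (cases "k \<in> K''")
        case True
        have "ow k \<in> Q" using True by (simp add: K''_def)
        then have "\<bar>h (ow k)\<bar> \<le> 1" by (rule hQ)
        then show ?thesis using True by (simp add: w_def abs_mult mult_left_le_one_le)
      qed (simp add: w_def)
    qed
    also have "\<dots> \<le> Jnorm N a" unfolding v'_def by (rule Jnorm_ge[OF nb vK'' fa])
    finally show ?thesis .
  qed
  have "N (jv b Q r) \<le> N X + N Y" unfolding split by (rule N_tri[OF nb fX fY])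
  also have "\<dots> \<le> 2 * Jnorm N a" using NX NY by simp
  finally show "N (jv (\<lambda>i. a i * (\<Sum>k\<in>K. if k \<le> i \<and> i \<le> e k then g k else 0)) Q r) \<le> 2 * Jnorm N a"
    unfolding b_def .
qed


lemma J_diag:
  assumes f: "f \<in> dual_space (Jnorm N)" and fa: "fin_supp a"
  shows "Jnorm N (\<lambda>i. f i * a i) \<le> 2 * dual_norm (Jnorm N) f * Jnorm N a"
proof -
  interpret S: seqn0 "Jnorm N" 1 2 by (rule J_seqn0)
  define D where "D = dual_norm (Jnorm N) f"
  have D0: "D \<ge> 0" unfolding D_def by (rule S.dual_norm_nonneg[OF f])
  show ?thesis
  proof (rule Jnorm_le[OF nb])
    fix K e assume v: "valid K e"
    have fK: "finite K" using v valid_finite by blast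
    define c where "c = jv (\<lambda>i. f i * a i) K e"
    have fc: "fin_supp c" unfolding c_def by (rule jv_fin[OF v])
    define L where "L = Suc (\<Sum>k\<in>K. e k)"
    have eL: "e k < L" if "k \<in> K" for k
    proof -
      have "e k \<le> (\<Sum>k\<in>K. e k)" using that fK by (intro member_le_sum) auto
      then show ?thesis by (simp add: L_def)
    qed
    have kL: "k < L" if "k \<in> K" for k using eL[OF that] v that unfolding valid_def by fastforce
    obtain g where gd0: "\<forall>d. (\<forall>i\<ge>L. d i = 0) \<longrightarrow> \<bar>pairing g d\<bar> \<le> N d" and gc: "pairing g c = N c"
      using HB[OF nb fc, of L] by blast
    have gb: "\<bar>g k\<bar> \<le> 1" if "k \<in> K" for k using g_unit[OF gd0 kL[OF that]] .
    have gd: "\<bar>pairing g d\<bar> \<le> N d" if d: "\<And>i. i \<notin> K \<Longrightarrow> d i = 0" for d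
    proof -
      have "\<forall>i\<ge>L. d i = 0" using d kL by (meson leD)
      then show ?thesis using gd0 by blast
    qed
    define b where "b = (\<lambda>i. a i * (\<Sum>k\<in>K. if k \<le> i \<and> i \<le> e k then g k else 0))"
    have fb: "fin_supp b" unfolding b_def by (rule fin_supp_mult2[OF fa])
    obtain L' where L': "L' \<ge> L" "\<And>i. i \<ge> L' \<Longrightarrow> a i = 0" using fin_supp_bound_ge[OF fa] by blast
    have "pairing f b = (\<Sum>i<L'. f i * b i)" by (rule pairing_lessThan) (simp add: b_def L')
    also have "\<dots> = (\<Sum>i<L'. (f i * a i) * (\<Sum>k\<in>K. if k \<le> i \<and> i \<le> e k then g k else 0))"
      by (simp add: b_def mult.assoc)
    also have "\<dots> = (\<Sum>k\<in>K. g k * (\<Sum>i<L'. if k \<le> i \<and> i \<le> e k then f i * a i else 0))"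
      by (rule swap_if) (use fK in auto)
    also have "\<dots> = (\<Sum>k\<in>K. g k * c k)"
    proof (rule sum.cong[OF refl])
      fix k assume kK: "k \<in> K"
      have "(\<Sum>i<L'. if k \<le> i \<and> i \<le> e k then f i * a i else 0) = (\<Sum>i\<in>{..<L'} \<inter> {i. k \<le> i \<and> i \<le> e k}. f i * a i)"
        unfolding sum.inter_restrict[OF finite_lessThan] by simp
      also have "{..<L'} \<inter> {i. k \<le> i \<and> i \<le> e k} = {k..e k}" using eL[OF kK] L' by auto
      finally show "g k * (\<Sum>i<L'. if k \<le> i \<and> i \<le> e k then f i * a i else 0) = g k * c k"
        using kK by (simp add: c_def jv_def)
    qed
    also have "\<dots> = pairing g c" by (rule pairing_eq[OF fK, symmetric]) (auto simp: c_def jv_def)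
    finally have pfb: "pairing f b = N c" using gc by simp
    have "N c \<le> \<bar>pairing f b\<bar>" using pfb by simp
    also have "\<dots> \<le> D * Jnorm N b" unfolding D_def by (rule S.pairing_bound[OF f fb])
    also have "\<dots> \<le> D * (2 * Jnorm N a)" unfolding b_def
      by (rule mult_left_mono[OF block_mult[OF fa v gb gd] D0])
    finally show "N (jv (\<lambda>i. f i * a i) K e) \<le> 2 * dual_norm (Jnorm N) f * Jnorm N a"
      by (simp add: c_def D_def algebra_simps)
  qed
qed

lemma J_seqn: "seqn (Jnorm N) 1 2"
proof -
  interpret S: seqn0 "Jnorm N" 1 2 by (rule J_seqn0)
  show ?thesis by unfold_locales (rule J_diag)
qed

end


definition ta :: "(nat \<Rightarrow> real) \<Rightarrow> nat \<Rightarrow> real" where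
  "ta a j = pairing (\<lambda>i. if j \<le> i then 1 else 0) a"

definition Fp :: "(nat \<Rightarrow> real) \<Rightarrow> nat \<Rightarrow> real" where
  "Fp \<beta> = (\<lambda>i. \<Sum>j\<le>i. \<beta> j)"

lemma Jsnorm_Fp: "Jsnorm N \<beta> = dual_norm (Jnorm N) (Fp \<beta>)"
  by (simp add: Jsnorm_def Fp_def)

lemma ta_lessThan: "(\<And>i. i \<ge> L \<Longrightarrow> a i = 0) \<Longrightarrow> ta a j = (\<Sum>i<L. if j \<le> i then a i else 0)"
  unfolding ta_def by (subst pairing_lessThan[of L]) (auto intro!: sum.cong)

lemma ta_zero: "(\<And>i. i \<ge> L \<Longrightarrow> a i = 0) \<Longrightarrow> j \<ge> L \<Longrightarrow> ta a j = 0"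
  by (subst ta_lessThan[of L]) (auto intro!: sum.neutral)

lemma ta_split:
  assumes fa: "fin_supp a" and km: "k \<le> m"
  shows "ta a k = (\<Sum>i=k..m. a i) + ta a (Suc m)"
proof -
  obtain L where L: "L \<ge> Suc m" "\<And>i. i \<ge> L \<Longrightarrow> a i = 0" using fin_supp_bound_ge[OF fa] by blast
  have "(\<Sum>i<L. if k \<le> i then a i else 0) = (\<Sum>i<L. (if k \<le> i \<and> i \<le> m then a i else 0) + (if Suc m \<le> i then a i else 0))"
    by (rule sum.cong) (use km in auto)
  also have "\<dots> = (\<Sum>i<L. if k \<le> i \<and> i \<le> m then a i else 0) + (\<Sum>i<L. if Suc m \<le> i then a i else 0)"
    by (rule sum.distrib)
  also have "(\<Sum>i<L. if k \<le> i \<and> i \<le> m then a i else 0) = (\<Sum>i\<in>{..<L} \<inter> {i. k \<le> i \<and> i \<le> m}. a i)"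
    unfolding sum.inter_restrict[OF finite_lessThan] by simp
  also have "{..<L} \<inter> {i. k \<le> i \<and> i \<le> m} = {k..m}" using L by auto
  finally show ?thesis using ta_lessThan[of L a] L by simp
qed

lemma ta_add: "fin_supp a \<Longrightarrow> fin_supp b \<Longrightarrow> ta (\<lambda>i. a i + b i) j = ta a j + ta b j"
  unfolding ta_def by (rule pairing_add)

lemma ta_scale: "fin_supp a \<Longrightarrow> ta (\<lambda>i. c * a i) j = c * ta a j"
  unfolding ta_def by (rule pairing_scale)

lemma ta_diff: "fin_supp a \<Longrightarrow> fin_supp b \<Longrightarrow> ta (\<lambda>i. a i - b i) j = ta a j - ta b j"
  unfolding ta_def by (rule pairing_diff)

lemma fin_supp_ta: "fin_supp a \<Longrightarrow> fin_supp (ta a)"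
proof -
  assume fa: "fin_supp a"
  obtain L where L: "\<And>i. i \<ge> L \<Longrightarrow> a i = 0" using fa fin_suppE by blast
  show ?thesis by (rule fin_supp_I[of L]) (rule ta_zero[OF L])
qed

lemma abel:
  assumes fa: "fin_supp a" and fb: "fin_supp \<beta>"
  shows "pairing (Fp \<beta>) a = pairing (ta a) \<beta>"
proof -
  obtain L1 L2 where L1: "\<And>i. i \<ge> L1 \<Longrightarrow> a i = 0" and L2: "\<And>i. i \<ge> L2 \<Longrightarrow> \<beta> i = 0"
    using fa fb fin_suppE by meson
  define L where "L = max L1 L2"
  have La: "\<And>i. i \<ge> L \<Longrightarrow> a i = 0" and Lb: "\<And>i. i \<ge> L \<Longrightarrow> \<beta> i = 0" using L1 L2 by (auto simp: L_def)
  have "pairing (Fp \<beta>) a = (\<Sum>i<L. (\<Sum>j\<le>i. \<beta> j) * a i)" unfolding Fp_def by (rule pairing_lessThan[OF La])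
  also have "\<dots> = (\<Sum>i<L. \<Sum>j<L. if j \<le> i then \<beta> j * a i else 0)"
  proof (rule sum.cong[OF refl])
    fix i assume "i \<in> {..<L}"
    then have "(\<Sum>j\<le>i. \<beta> j * a i) = (\<Sum>j\<in>{..<L} \<inter> {j. j \<le> i}. \<beta> j * a i)"
      by (intro sum.cong) auto
    also have "\<dots> = (\<Sum>j<L. if j \<le> i then \<beta> j * a i else 0)"
      unfolding sum.inter_restrict[OF finite_lessThan] by simp
    finally show "(\<Sum>j\<le>i. \<beta> j) * a i = (\<Sum>j<L. if j \<le> i then \<beta> j * a i else 0)"
      by (simp add: sum_distrib_right)
  qed
  also have "\<dots> = (\<Sum>j<L. \<Sum>i<L. if j \<le> i then \<beta> j * a i else 0)" by (rule sum.swap)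
  also have "\<dots> = (\<Sum>j<L. ta a j * \<beta> j)"
  proof (rule sum.cong[OF refl])
    fix j
    have "ta a j = (\<Sum>i<L. if j \<le> i then a i else 0)" by (rule ta_lessThan[OF La])
    have "(\<Sum>i<L. if j \<le> i then \<beta> j * a i else 0) = (\<Sum>i<L. (if j \<le> i then a i else 0) * \<beta> j)"
      by (rule sum.cong) auto
    also have "\<dots> = (\<Sum>i<L. if j \<le> i then a i else 0) * \<beta> j" by (rule sum_distrib_right[symmetric])
    finally show "(\<Sum>i<L. if j \<le> i then \<beta> j * a i else 0) = ta a j * \<beta> j"
      using \<open>ta a j = _\<close> by simp
  qed
  also have "\<dots> = pairing (ta a) \<beta>" by (rule pairing_lessThan[OF Lb, symmetric])
  finally show ?thesis .
qed

lemma telescope: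
  fixes p :: "nat \<Rightarrow> real"
  shows "k \<le> m \<Longrightarrow> (\<Sum>i=k..m. p i - p (Suc i)) = p k - p (Suc m)"
proof -
  assume km: "k \<le> m"
  have a: "(\<Sum>i=k..m. p (Suc i) - p i) = p (Suc m) - p k" by (rule sum_Suc_diff) (use km in simp)
  have b: "(\<Sum>i=k..m. p i - p (Suc i)) = (\<Sum>i=k..m. - (p (Suc i) - p i))" by (rule sum.cong) auto
  show ?thesis unfolding b sum_negf a by simp
qed

lemma ta_tele:
  fixes p :: "nat \<Rightarrow> real"
  assumes L: "\<And>i. i \<ge> L \<Longrightarrow> p i = 0"
  shows "ta (\<lambda>i. p i - p (Suc i)) j = p j"
proof -
  define L' where "L' = Suc (max j L)"
  have Lc': "p i - p (Suc i) = 0" if "i \<ge> L'" for i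
  proof -
    have "p i = 0" using L[of i] that by (simp add: L'_def)
    moreover have "p (Suc i) = 0" using L[of "Suc i"] that by (simp add: L'_def)
    ultimately show ?thesis by simp
  qed
  have "ta (\<lambda>i. p i - p (Suc i)) j = (\<Sum>i<L'. if j \<le> i then p i - p (Suc i) else 0)"
    by (rule ta_lessThan) (rule Lc')
  also have "\<dots> = (\<Sum>i\<in>{..<L'} \<inter> {i. j \<le> i}. p i - p (Suc i))"
    unfolding sum.inter_restrict[OF finite_lessThan] by simp
  also have "{..<L'} \<inter> {i. j \<le> i} = {j..L' - 1}" by (auto simp: L'_def)
  also have "(\<Sum>i=j..L' - 1. p i - p (Suc i)) = p j - p (Suc (L' - 1))"
    by (rule telescope) (simp add: L'_def)
  also have "p (Suc (L' - 1)) = 0" using L by (simp add: L'_def)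
  finally show ?thesis by simp
qed

context
  fixes N :: "(nat \<Rightarrow> real) \<Rightarrow> real"
  assumes nb: "normalized_1unc_basis_norm N"
begin

interpretation J: seqn "Jnorm N" 1 2 by (rule J_seqn[OF nb])

lemma ta_bound: "fin_supp a \<Longrightarrow> \<bar>ta a j\<bar> \<le> Jnorm N a"
proof -
  assume fa: "fin_supp a"
  obtain L where L: "\<And>i. i \<ge> L \<Longrightarrow> a i = 0" using fa fin_suppE by blast
  show ?thesis
  proof (cases "j < L")
    case True
    have "ta a j = (\<Sum>i=j..L-1. a i) + ta a (Suc (L - 1))" by (rule ta_split[OF fa]) (use True in auto)
    moreover have "ta a (Suc (L - 1)) = 0" by (rule ta_zero[OF L]) auto
    ultimately show ?thesis using Jnorm_interval[OF nb fa, of j "L - 1"] True by simp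
  next
    case False
    then show ?thesis using ta_zero[OF L, of j] Jnorm_nonneg[OF nb fa] by simp
  qed
qed

lemma Fp_dual: "fin_supp \<beta> \<Longrightarrow> Fp \<beta> \<in> dual_space (Jnorm N) \<and> Jsnorm N \<beta> \<le> l1 \<beta>"
proof -
  assume fb: "fin_supp \<beta>"
  have *: "\<bar>pairing (Fp \<beta>) a\<bar> \<le> l1 \<beta>" if fa: "fin_supp a" and Ma: "Jnorm N a \<le> 1" for a
  proof -
    have "pairing (Fp \<beta>) a = (\<Sum>j\<in>{j. \<beta> j \<noteq> 0}. ta a j * \<beta> j)"
      using abel[OF fa fb] unfolding pairing_def by simp
    also have "\<bar>\<dots>\<bar> \<le> (\<Sum>j\<in>{j. \<beta> j \<noteq> 0}. \<bar>ta a j * \<beta> j\<bar>)" by (rule sum_abs)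
    also have "\<dots> \<le> (\<Sum>j\<in>{j. \<beta> j \<noteq> 0}. \<bar>\<beta> j\<bar>)"
    proof (rule sum_mono)
      fix j
      have "\<bar>ta a j\<bar> \<le> 1" using ta_bound[OF fa, of j] Ma by simp
      then show "\<bar>ta a j * \<beta> j\<bar> \<le> \<bar>\<beta> j\<bar>" by (simp add: abs_mult mult_left_le_one_le)
    qed
    finally show ?thesis unfolding l1_def .
  qed
  show ?thesis unfolding Jsnorm_Fp using J.dual_space_I[OF *] J.dual_norm_le[OF *] by blast
qed

lemma Fp_add: "Fp (\<lambda>i. a i + b i) = (\<lambda>i. Fp a i + Fp b i)"
  by (simp add: Fp_def sum.distrib)

lemma Fp_scale: "Fp (\<lambda>i. c * a i) = (\<lambda>i. c * Fp a i)"
  by (simp add: Fp_def sum_distrib_left)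

lemma Js_nonneg: "fin_supp \<beta> \<Longrightarrow> Jsnorm N \<beta> \<ge> 0"
  unfolding Jsnorm_Fp using J.dual_norm_nonneg Fp_dual by blast

lemma Fp_bound: "fin_supp \<beta> \<Longrightarrow> fin_supp a \<Longrightarrow> \<bar>pairing (Fp \<beta>) a\<bar> \<le> Jsnorm N \<beta> * Jnorm N a"
  unfolding Jsnorm_Fp using J.pairing_bound Fp_dual by blast

lemma Js_tri: "fin_supp a \<Longrightarrow> fin_supp b \<Longrightarrow> Jsnorm N (\<lambda>i. a i + b i) \<le> Jsnorm N a + Jsnorm N b"
proof -
  assume fa: "fin_supp a" and fb: "fin_supp b"
  show ?thesis unfolding Jsnorm_Fp[of N "\<lambda>i. a i + b i"]
  proof (rule J.dual_norm_le)
    fix x assume fx: "fin_supp x" and Mx: "Jnorm N x \<le> 1"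
    have "pairing (Fp (\<lambda>i. a i + b i)) x = pairing (Fp a) x + pairing (Fp b) x"
      unfolding Fp_add by (rule pairing_add_left)
    then have "\<bar>pairing (Fp (\<lambda>i. a i + b i)) x\<bar> \<le> \<bar>pairing (Fp a) x\<bar> + \<bar>pairing (Fp b) x\<bar>" by simp
    also have "\<dots> \<le> Jsnorm N a * Jnorm N x + Jsnorm N b * Jnorm N x"
      using Fp_bound[OF fa fx] Fp_bound[OF fb fx] by simp
    also have "\<dots> \<le> Jsnorm N a + Jsnorm N b"
      using Mx Js_nonneg[OF fa] Js_nonneg[OF fb] J.Mnn[OF fx]
      by (simp add: add_mono mult_left_le)
    finally show "\<bar>pairing (Fp (\<lambda>i. a i + b i)) x\<bar> \<le> Jsnorm N a + Jsnorm N b" .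
  qed
qed

lemma Js_hom_le: "fin_supp a \<Longrightarrow> Jsnorm N (\<lambda>i. c * a i) \<le> \<bar>c\<bar> * Jsnorm N a"
proof -
  assume fa: "fin_supp a"
  show ?thesis unfolding Jsnorm_Fp[of N "\<lambda>i. c * a i"]
  proof (rule J.dual_norm_le)
    fix x assume fx: "fin_supp x" and Mx: "Jnorm N x \<le> 1"
    have "\<bar>pairing (Fp (\<lambda>i. c * a i)) x\<bar> = \<bar>c\<bar> * \<bar>pairing (Fp a) x\<bar>"
      unfolding Fp_scale pairing_scale_left by (simp add: abs_mult)
    also have "\<dots> \<le> \<bar>c\<bar> * (Jsnorm N a * Jnorm N x)"
      using Fp_bound[OF fa fx] by (simp add: mult_left_mono)
    also have "\<dots> \<le> \<bar>c\<bar> * Jsnorm N a"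
      using Mx Js_nonneg[OF fa] J.Mnn[OF fx] by (simp add: mult_left_mono mult_left_le)
    finally show "\<bar>pairing (Fp (\<lambda>i. c * a i)) x\<bar> \<le> \<bar>c\<bar> * Jsnorm N a" .
  qed
qed

lemma Js_hom: "fin_supp a \<Longrightarrow> Jsnorm N (\<lambda>i. c * a i) = \<bar>c\<bar> * Jsnorm N a"
proof (cases "c = 0")
  case True
  assume fa: "fin_supp a"
  have "Jsnorm N (\<lambda>i. 0) = 0"
    using Js_hom_le[OF fin_supp_zero, of 0] Js_nonneg[OF fin_supp_zero] by simp
  then show ?thesis using True by simp
next
  case False
  assume fa: "fin_supp a"
  have "Jsnorm N a = Jsnorm N (\<lambda>i. (1 / c) * (c * a i))" using False by simp
  also have "\<dots> \<le> \<bar>1 / c\<bar> * Jsnorm N (\<lambda>i. c * a i)"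
    by (rule Js_hom_le[OF fin_supp_scale[OF fa]])
  finally have "\<bar>c\<bar> * Jsnorm N a \<le> Jsnorm N (\<lambda>i. c * a i)"
    using False by (simp add: abs_divide field_simps)
  then show ?thesis using Js_hom_le[OF fa, of c] by simp
qed

lemma Fp_point: "fin_supp \<beta> \<Longrightarrow> \<bar>Fp \<beta> j\<bar> \<le> Jsnorm N \<beta>"
proof -
  assume fb: "fin_supp \<beta>"
  have "\<bar>Fp \<beta> j\<bar> = \<bar>pairing (Fp \<beta>) (unit_vec j)\<bar>" by simp
  also have "\<dots> \<le> Jsnorm N \<beta> * Jnorm N (unit_vec j)" by (rule Fp_bound[OF fb fin_supp_unit])
  also have "\<dots> \<le> Jsnorm N \<beta>" using Jnorm_unit[OF nb, of j] Js_nonneg[OF fb] J.Mnn[OF fin_supp_unit]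
    by (simp add: mult_left_le)
  finally show ?thesis .
qed

lemma Js_coord: "fin_supp \<beta> \<Longrightarrow> \<bar>\<beta> j\<bar> \<le> 2 * Jsnorm N \<beta>"
proof (cases j)
  case 0
  assume fb: "fin_supp \<beta>"
  have "\<beta> j = Fp \<beta> 0" using 0 by (simp add: Fp_def)
  then show ?thesis using Fp_point[OF fb, of 0] Js_nonneg[OF fb] by simp
next
  case (Suc j')
  assume fb: "fin_supp \<beta>"
  have "\<beta> j = Fp \<beta> j - Fp \<beta> j'" using Suc by (simp add: Fp_def)
  then show ?thesis using Fp_point[OF fb, of j] Fp_point[OF fb, of j'] by simp
qed

lemma Js_tsum: "fin_supp \<beta> \<Longrightarrow> \<bar>pairing (\<lambda>_. 1) \<beta>\<bar> \<le> Jsnorm N \<beta>"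
proof -
  assume fb: "fin_supp \<beta>"
  obtain L where L: "\<And>i. i \<ge> L \<Longrightarrow> \<beta> i = 0" using fb fin_suppE by blast
  have "pairing (\<lambda>_. 1) \<beta> = (\<Sum>i<L. \<beta> i)" using pairing_lessThan[OF L] by simp
  also have "\<dots> = Fp \<beta> L" using L by (simp add: Fp_def lessThan_Suc_atMost[symmetric])
  finally show ?thesis using Fp_point[OF fb, of L] by simp
qed

lemma Js_l1: "fin_supp \<beta> \<Longrightarrow> Jsnorm N \<beta> \<le> l1 \<beta>"
  using Fp_dual by blast

lemma Js_tail: "fin_supp \<beta> \<Longrightarrow> Jsnorm N (\<lambda>i. if i < n then 0 else \<beta> i) \<le> 3 * Jsnorm N \<beta>"
proof (cases n)
  case 0
  assume fb: "fin_supp \<beta>"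
  then show ?thesis using 0 Js_nonneg[OF fb] by simp
next
  case (Suc n')
  assume fb: "fin_supp \<beta>"
  show ?thesis unfolding Jsnorm_Fp[of N "\<lambda>i. if i < n then 0 else \<beta> i"]
  proof (rule J.dual_norm_le)
    fix a assume fa: "fin_supp a" and Ma: "Jnorm N a \<le> 1"
    define a' where "a' = (\<lambda>i. (if i < n then 0 else a i) - ta a n * unit_vec n' i)"
    have fa': "fin_supp a'" unfolding a'_def by (intro fin_supp_diff fin_supp_if2 fa fin_supp_scale fin_supp_unit)
    have ta': "ta a' j = (if j < n then 0 else ta a j)" for j
    proof -
      have "ta a' j = ta (\<lambda>i. if i < n then 0 else a i) j - ta (\<lambda>i. ta a n * unit_vec n' i) j"
        unfolding a'_def by (rule ta_diff[OF fin_supp_if2[OF fa] fin_supp_scale[OF fin_supp_unit]])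
      also have "ta (\<lambda>i. ta a n * unit_vec n' i) j = ta a n * ta (unit_vec n') j"
        by (rule ta_scale[OF fin_supp_unit])
      also have "ta (unit_vec n') j = (if j \<le> n' then 1 else 0)"
        by (simp add: ta_def pairing_unit)
      also have "ta (\<lambda>i. if i < n then 0 else a i) j = ta a (max j n)"
      proof -
        obtain L where L: "\<And>i. i \<ge> L \<Longrightarrow> a i = 0" using fa fin_suppE by blast
        have L2: "\<And>i. i \<ge> L \<Longrightarrow> (if i < n then 0 else a i) = 0" using L by simp
        have A: "ta (\<lambda>i. if i < n then 0 else a i) j = (\<Sum>i<L. if j \<le> i then (if i < n then 0 else a i) else 0)"
          by (rule ta_lessThan[OF L2])
        have B: "ta a (max j n) = (\<Sum>i<L. if max j n \<le> i then a i else 0)" by (rule ta_lessThan[OF L])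
        show ?thesis unfolding A B by (rule sum.cong) auto
      qed
      finally show ?thesis using Suc by (auto simp: max_def)
    qed
    have "pairing (Fp (\<lambda>i. if i < n then 0 else \<beta> i)) a = pairing (ta a) (\<lambda>i. if i < n then 0 else \<beta> i)"
      by (rule abel[OF fa fin_supp_if2[OF fb]])
    also have "\<dots> = pairing (ta a') \<beta>"
    proof -
      obtain L where L: "\<And>i. i \<ge> L \<Longrightarrow> \<beta> i = 0" using fb fin_suppE by blast
      have L2: "\<And>i. i \<ge> L \<Longrightarrow> (if i < n then 0 else \<beta> i) = 0" using L by simp
      have A: "pairing (ta a) (\<lambda>i. if i < n then 0 else \<beta> i) = (\<Sum>i<L. ta a i * (if i < n then 0 else \<beta> i))"
        by (rule pairing_lessThan[OF L2])
      have B: "pairing (ta a') \<beta> = (\<Sum>i<L. ta a' i * \<beta> i)" by (rule pairing_lessThan[OF L])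
      show ?thesis unfolding A B ta' by (rule sum.cong) auto
    qed
    also have "\<dots> = pairing (Fp \<beta>) a'" by (rule abel[OF fa' fb, symmetric])
    finally have eq: "pairing (Fp (\<lambda>i. if i < n then 0 else \<beta> i)) a = pairing (Fp \<beta>) a'" .
    have "Jnorm N a' \<le> Jnorm N (\<lambda>i. if i < n then 0 else a i) + Jnorm N (\<lambda>i. ta a n * unit_vec n' i)"
      unfolding a'_def by (rule Jnorm_diff[OF nb fin_supp_if2[OF fa] fin_supp_scale[OF fin_supp_unit]])
    also have "\<dots> \<le> 2 * Jnorm N a + \<bar>ta a n\<bar> * 1"
    proof -
      have "Jnorm N (\<lambda>i. ta a n * unit_vec n' i) = \<bar>ta a n\<bar> * Jnorm N (unit_vec n')"
        by (rule Jnorm_hom[OF nb fin_supp_unit])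
      also have "\<dots> \<le> \<bar>ta a n\<bar> * 1" by (rule mult_left_mono[OF Jnorm_unit[OF nb]]) simp
      finally show ?thesis using Jnorm_tail[OF nb fa, of n] by simp
    qed
    also have "\<dots> \<le> 3" using Ma ta_bound[OF fa, of n] by simp
    finally have Ma': "Jnorm N a' \<le> 3" .
    have "\<bar>pairing (Fp (\<lambda>i. if i < n then 0 else \<beta> i)) a\<bar> \<le> Jsnorm N \<beta> * Jnorm N a'"
      unfolding eq by (rule Fp_bound[OF fb fa'])
    also have "\<dots> \<le> Jsnorm N \<beta> * 3" using Ma' Js_nonneg[OF fb] by (simp add: mult_left_mono)
    finally show "\<bar>pairing (Fp (\<lambda>i. if i < n then 0 else \<beta> i)) a\<bar> \<le> 3 * Jsnorm N \<beta>" by simp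
  qed
qed

lemma Js_seqn0: "seqn0 (Jsnorm N) 2 3"
  by unfold_locales (auto intro: Js_tri Js_l1 Js_tsum Js_tail Js_coord simp: Js_hom)


lemma prodJ:
  assumes fa: "fin_supp a" and fb: "fin_supp b"
  defines "c \<equiv> (\<lambda>j. ta a j * ta b j - ta a (Suc j) * ta b (Suc j))"
  shows "fin_supp c" "\<And>j. ta c j = ta a j * ta b j" "Jnorm N c \<le> 2 * Jnorm N a * Jnorm N b"
proof -
  obtain L1 L2 where L1: "\<And>i. i \<ge> L1 \<Longrightarrow> a i = 0" and L2: "\<And>i. i \<ge> L2 \<Longrightarrow> b i = 0"
    using fa fb fin_suppE by meson
  define L where "L = max L1 L2"
  have La: "\<And>i. i \<ge> L \<Longrightarrow> a i = 0" and Lb: "\<And>i. i \<ge> L \<Longrightarrow> b i = 0" using L1 L2 by (auto simp: L_def)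
  define p where "p = (\<lambda>j. ta a j * ta b j)"
  have pL: "p i = 0" if "i \<ge> L" for i using ta_zero[OF La that] by (simp add: p_def)
  have ce: "c = (\<lambda>j. p j - p (Suc j))" by (simp add: c_def p_def)
  show "fin_supp c" unfolding ce by (rule fin_supp_I[of L]) (simp add: pL)
  show "ta c j = ta a j * ta b j" for j unfolding ce using ta_tele[of L p j] pL by (simp add: p_def)
  show "Jnorm N c \<le> 2 * Jnorm N a * Jnorm N b"
  proof (rule Jnorm_le[OF nb])
    fix K e assume v: "valid K e"
    define u1 where "u1 = (\<lambda>k. jv a K e k * ta b k)"
    define u2 where "u2 = (\<lambda>k. ta a (Suc (e k)) * jv b K e k)"
    have fu1: "fin_supp u1" unfolding u1_def by (rule fin_supp_mult2[OF jv_fin[OF v]])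
    have fu2: "fin_supp u2" unfolding u2_def by (rule fin_supp_mult[OF jv_fin[OF v]])
    have eq: "jv c K e = (\<lambda>k. u1 k + u2 k)"
    proof
      fix k
      show "jv c K e k = u1 k + u2 k"
      proof (cases "k \<in> K")
        case False then show ?thesis by (simp add: jv_def u1_def u2_def)
      next
        case True
        have ke: "k \<le> e k" using v True by (simp add: valid_def)
        have "jv c K e k = p k - p (Suc (e k))" using True telescope[OF ke, of p] by (simp add: jv_def ce)
        moreover have "ta a k = (\<Sum>i=k..e k. a i) + ta a (Suc (e k))" by (rule ta_split[OF fa ke])
        moreover have "ta b k = (\<Sum>i=k..e k. b i) + ta b (Suc (e k))" by (rule ta_split[OF fb ke])
        ultimately show ?thesis using True by (simp add: u1_def u2_def jv_def p_def algebra_simps)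
      qed
    qed
    have "N (jv c K e) \<le> N u1 + N u2" unfolding eq by (rule N_tri[OF nb fu1 fu2])
    also have "N u1 \<le> Jnorm N b * N (jv a K e)"
      by (rule N_weight[OF nb jv_fin[OF v]]) (auto simp: u1_def abs_mult mult.commute intro!: mult_right_mono ta_bound[OF fb] Jnorm_nonneg[OF nb fb])
    also have "N u2 \<le> Jnorm N a * N (jv b K e)"
      by (rule N_weight[OF nb jv_fin[OF v]]) (auto simp: u2_def abs_mult intro: mult_right_mono ta_bound[OF fa] Jnorm_nonneg[OF nb fa])
    also have "Jnorm N b * N (jv a K e) + Jnorm N a * N (jv b K e) \<le> Jnorm N b * Jnorm N a + Jnorm N a * Jnorm N b"
      using Jnorm_ge[OF nb v fa] Jnorm_ge[OF nb v fb] Jnorm_nonneg[OF nb fa] Jnorm_nonneg[OF nb fb]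
      by (intro add_mono mult_left_mono) auto
    finally show "N (jv c K e) \<le> 2 * Jnorm N a * Jnorm N b" by simp
  qed
qed

lemma Js_diag:
  assumes mu: "\<mu> \<in> dual_space (Jsnorm N)" and fb: "fin_supp \<beta>"
  shows "Jsnorm N (\<lambda>i. \<mu> i * \<beta> i) \<le> 2 * dual_norm (Jsnorm N) \<mu> * Jsnorm N \<beta>"
proof -
  interpret S: seqn0 "Jsnorm N" 2 3 by (rule Js_seqn0)
  define D where "D = dual_norm (Jsnorm N) \<mu>"
  have D0: "D \<ge> 0" unfolding D_def by (rule S.dual_norm_nonneg[OF mu])
  obtain L where L: "\<And>i. i \<ge> L \<Longrightarrow> \<beta> i = 0" using fb fin_suppE by blast
  have fmb: "fin_supp (\<lambda>i. \<mu> i * \<beta> i)" by (rule fin_supp_mult[OF fb])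
  have "Jsnorm N (\<lambda>i. \<mu> i * \<beta> i) \<le> D * (2 * Jsnorm N \<beta>)"
    unfolding Jsnorm_Fp[of N "\<lambda>i. \<mu> i * \<beta> i"]
  proof (rule J.dual_norm_le)
    fix a assume fa: "fin_supp a" and Ma: "Jnorm N a \<le> 1"
    define \<gamma> where "\<gamma> = (\<lambda>j. \<beta> j * ta a j)"
    have fg: "fin_supp \<gamma>" unfolding \<gamma>_def by (rule fin_supp_mult2[OF fb])
    have Lmb: "\<And>i. i \<ge> L \<Longrightarrow> \<mu> i * \<beta> i = 0" and Lg: "\<And>i. i \<ge> L \<Longrightarrow> \<gamma> i = 0"
      using L by (auto simp: \<gamma>_def)
    have "pairing (Fp (\<lambda>i. \<mu> i * \<beta> i)) a = pairing (ta a) (\<lambda>i. \<mu> i * \<beta> i)" by (rule abel[OF fa fmb])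
    also have "\<dots> = (\<Sum>i<L. ta a i * (\<mu> i * \<beta> i))" by (rule pairing_lessThan[OF Lmb])
    also have "\<dots> = (\<Sum>i<L. \<mu> i * \<gamma> i)" by (rule sum.cong) (auto simp: \<gamma>_def)
    also have "\<dots> = pairing \<mu> \<gamma>" by (rule pairing_lessThan[OF Lg, symmetric])
    finally have e1: "pairing (Fp (\<lambda>i. \<mu> i * \<beta> i)) a = pairing \<mu> \<gamma>" .
    have Jg: "Jsnorm N \<gamma> \<le> 2 * Jsnorm N \<beta>"
      unfolding Jsnorm_Fp[of N \<gamma>]
    proof (rule J.dual_norm_le)
      fix b assume fb': "fin_supp b" and Mb: "Jnorm N b \<le> 1"
      define c where "c = (\<lambda>j. ta a j * ta b j - ta a (Suc j) * ta b (Suc j))"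
      have fc: "fin_supp c" and tc: "\<And>j. ta c j = ta a j * ta b j" and Jc: "Jnorm N c \<le> 2 * Jnorm N a * Jnorm N b"
        using prodJ[OF fa fb'] unfolding c_def by auto
      have "pairing (Fp \<gamma>) b = pairing (ta b) \<gamma>" by (rule abel[OF fb' fg])
      also have "\<dots> = (\<Sum>i<L. ta b i * \<gamma> i)" by (rule pairing_lessThan[OF Lg])
      also have "\<dots> = (\<Sum>i<L. ta c i * \<beta> i)" by (rule sum.cong) (auto simp: \<gamma>_def tc)
      also have "\<dots> = pairing (ta c) \<beta>" by (rule pairing_lessThan[OF L, symmetric])
      also have "\<dots> = pairing (Fp \<beta>) c" by (rule abel[OF fc fb, symmetric])
      finally have "\<bar>pairing (Fp \<gamma>) b\<bar> \<le> Jsnorm N \<beta> * Jnorm N c" using Fp_bound[OF fb fc] by simp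
      also have "\<dots> \<le> Jsnorm N \<beta> * (2 * 1 * 1)"
      proof (rule mult_left_mono[OF _ Js_nonneg[OF fb]])
        have "2 * Jnorm N a * Jnorm N b \<le> 2 * 1 * 1"
          using Ma Mb Jnorm_nonneg[OF nb fa] Jnorm_nonneg[OF nb fb'] by (intro mult_mono) auto
        then show "Jnorm N c \<le> 2 * 1 * 1" using Jc by simp
      qed
      finally show "\<bar>pairing (Fp \<gamma>) b\<bar> \<le> 2 * Jsnorm N \<beta>" by simp
    qed
    have "\<bar>pairing (Fp (\<lambda>i. \<mu> i * \<beta> i)) a\<bar> \<le> D * Jsnorm N \<gamma>"
      unfolding e1 D_def by (rule S.pairing_bound[OF mu fg])
    also have "\<dots> \<le> D * (2 * Jsnorm N \<beta>)" by (rule mult_left_mono[OF Jg D0])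
    finally show "\<bar>pairing (Fp (\<lambda>i. \<mu> i * \<beta> i)) a\<bar> \<le> D * (2 * Jsnorm N \<beta>)" .
  qed
  then show ?thesis by (simp add: D_def algebra_simps)
qed

lemma Js_seqn: "seqn (Jsnorm N) 2 3"
proof -
  interpret S: seqn0 "Jsnorm N" 2 3 by (rule Js_seqn0)
  show ?thesis by unfold_locales (rule Js_diag)
qed

end

theorem proposition1p17:
  fixes N :: "(nat \<Rightarrow> real) \<Rightarrow> real"
  assumes "normalized_1unc_basis_norm N"
  shows "Ldiag (Jnorm N) = dual_space (Jnorm N)
    \<and> (\<exists>c d. 0 \<le> c \<and> 0 \<le> d \<and> c * d \<le> 2 \<and>
         (\<forall>lam\<in>Ldiag (Jnorm N).
            dual_norm (Jnorm N) lam \<le> c * op_norm (Jnorm N) lam \<and>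
            op_norm (Jnorm N) lam \<le> d * dual_norm (Jnorm N) lam))
    \<and> RI_Kdiag (Jnorm N) = R_one_cspan_dual (Jnorm N)
    \<and> Ldiag (Jsnorm N) = dual_space (Jsnorm N)
    \<and> (\<exists>c d. 0 \<le> c \<and> 0 \<le> d \<and> c * d \<le> 2 \<and>
         (\<forall>lam\<in>Ldiag (Jsnorm N).
            dual_norm (Jsnorm N) lam \<le> c * op_norm (Jsnorm N) lam \<and>
            op_norm (Jsnorm N) lam \<le> d * dual_norm (Jsnorm N) lam))
    \<and> RI_Kdiag (Jsnorm N) = R_one_cspan_dual (Jsnorm N)"
proof -
  interpret J: seqn "Jnorm N" 1 2 by (rule J_seqn[OF assms])
  interpret S: seqn "Jsnorm N" 2 3 by (rule Js_seqn[OF assms])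
  show ?thesis using J.Ldiag_eq J.norm_equiv J.RI_eq S.Ldiag_eq S.norm_equiv S.RI_eq by blast
qed

end
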